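(* Let $H\in(\tfrac12,1)$, $T>0$, and let $X^H$, $Y^H$ be centered Gaussian processes on $[0,T]$ with covariances $R^{X^H}$ and $R^{Y^H}$ defined below. There is a constant $C>0$ (depending on $H$ and $T$) such that for all $s,t\in[0,T]$, $$\mathbf E\big(|X^H_t-X^H_s|^2\big)\le C|t-s|^{1/2},\qquad \mathbf E\big(|Y^H_t-Y^H_s|^2\big)\le C|t-s|^{1/2}.$$ Consequently, $X^H$ and $Y^H$ each admit a version with Hölder continuous paths of every order $\delta\in(0,\tfrac14)$.
   Context: For $0\le s\le t$ (extended symmetrically to $s>t$): $R^{X^H}(t,s)=\frac{H}{2\sqrt{2\pi}}\int_0^s (s-a)^{2H-1}[(t+a)^{-1/2}+(t-a)^{-1/2}]da$; $R^{Y^H}(t,s)=\frac{H}{2\sqrt{2\pi}}\int_0^s (s-a)^{-1/2}[(t+a)^{2H-1}-(t-a)^{2H-1}]da$. *)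

theory Defs
  imports "HOL-Probability.Probability"
begin

definition RX :: "real \<Rightarrow> real \<Rightarrow> real \<Rightarrow> real" where
  "RX H t s = (let u = min t s; v = max t s in
     H / (2 * sqrt (2 * pi)) *
     (LBINT a=0..u. (u - a) powr (2*H - 1) * ((v + a) powr (-1/2) + (v - a) powr (-1/2))))"

definition RY :: "real \<Rightarrow> real \<Rightarrow> real \<Rightarrow> real" where
  "RY H t s = (let u = min t s; v = max t s in
     H / (2 * sqrt (2 * pi)) *
     (LBINT a=0..u. (u - a) powr (-1/2) * ((v + a) powr (2*H - 1) - (v - a) powr (2*H - 1))))"

text \<open>X is a centered Gaussian process on [0,T] with covariance R: every finite
  linear combination of the X_t (t in [0,T]) is a centered normal random variable
  with variance given by R (a degenerate normal, i.e. a.s. 0, when the variance is 0).\<close>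
definition centered_gaussian_process ::
  "'a measure \<Rightarrow> real \<Rightarrow> (real \<Rightarrow> 'a \<Rightarrow> real) \<Rightarrow> (real \<Rightarrow> real \<Rightarrow> real) \<Rightarrow> bool" where
  "centered_gaussian_process M T X R \<longleftrightarrow>
     (\<forall>t\<in>{0..T}. X t \<in> borel_measurable M) \<and>
     (\<forall>(n::nat) (ts::nat \<Rightarrow> real) (c::nat \<Rightarrow> real). (\<forall>i<n. ts i \<in> {0..T}) \<longrightarrow>
        (let Z = (\<lambda>\<omega>. \<Sum>i<n. c i * X (ts i) \<omega>);
             v = (\<Sum>i<n. \<Sum>j<n. c i * c j * R (ts i) (ts j))
         in v \<ge> 0 \<and>
            (if v = 0 then (AE \<omega> in M. Z \<omega> = 0)
             else distributed M lborel Z (\<lambda>x. ennreal (normal_density 0 (sqrt v) x)))))"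

definition is_version :: "'a measure \<Rightarrow> real \<Rightarrow> (real \<Rightarrow> 'a \<Rightarrow> real) \<Rightarrow> (real \<Rightarrow> 'a \<Rightarrow> real) \<Rightarrow> bool" where
  "is_version M T X Y \<longleftrightarrow>
     (\<forall>t\<in>{0..T}. Y t \<in> borel_measurable M \<and> (AE \<omega> in M. X t \<omega> = Y t \<omega>))"

definition holder_on :: "real \<Rightarrow> real \<Rightarrow> (real \<Rightarrow> real) \<Rightarrow> bool" where
  "holder_on T \<delta> f \<longleftrightarrow> (\<exists>K. \<forall>s\<in>{0..T}. \<forall>t\<in>{0..T}. \<bar>f t - f s\<bar> \<le> K * \<bar>t - s\<bar> powr \<delta>)"

end

theory Submission
  imports Defs
begin

lemma LBINT_eq_HK:
  fixes f :: "real \<Rightarrow> real"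
  assumes m: "f \<in> borel_measurable borel" and i: "f integrable_on {p<..<q}"
    and nn: "\<And>x. x \<in> {p<..<q} \<Longrightarrow> 0 \<le> f x" and pq: "p \<le> q"
  shows "(LBINT x=p..q. f x) = integral {p<..<q} f"
proof -
  have ai: "f absolutely_integrable_on {p<..<q}"
    using nonnegative_absolutely_integrable_1[OF i nn] .
  have si: "set_integrable lborel {p<..<q} f"
    using ai unfolding set_integrable_def
    by (subst integrable_completion[symmetric]) (use m in auto)
  have "(LBINT x=p..q. f x) = (LBINT x:{p<..<q}. f x)"
  proof -
    have "einterval p q = {p<..<q}" by (auto simp: einterval_def)
    then show ?thesis using pq by (simp add: interval_lebesgue_integral_def)
  qed
  also have "\<dots> = integral {p<..<q} f"
    by (rule set_borel_integral_eq_integral(2)[OF si])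
  finally show ?thesis .
qed

lemma int_cminus:
  fixes c p q g :: real
  assumes g: "g > -1" and pq: "p \<le> q" and qc: "q \<le> c"
  shows "((\<lambda>a. (c - a) powr g) has_integral ((c-p) powr (g+1) - (c-q) powr (g+1)) / (g+1)) {p..q}"
proof -
  define F where "F = (\<lambda>a. - ((c - a) powr (g+1)) / (g+1))"
  have "((\<lambda>a. (c - a) powr g) has_integral (F q - F p)) {p..q}"
  proof (rule fundamental_theorem_of_calculus_interior[OF pq])
    show "continuous_on {p..q} F" unfolding F_def
      using qc g by (intro continuous_intros continuous_on_powr') auto
    fix x assume x: "x \<in> {p<..<q}"
    then have "c - x > 0" using qc by auto
    have D: "((\<lambda>a. (c - a) powr (g+1)) has_real_derivative (g+1) * (c - x) powr (g + 1 - of_nat 1) * (-1)) (at x)"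
      by (rule DERIV_fun_powr) (use \<open>c - x > 0\<close> in \<open>auto intro!: derivative_eq_intros\<close>)
    have "(F has_real_derivative ((g+1) * (c - x) powr g / (g+1))) (at x)"
      using DERIV_cdivide[OF DERIV_minus[OF D], of "g+1"] by (simp add: F_def)
    then show "(F has_vector_derivative (c - x) powr g) (at x)"
      unfolding has_real_derivative_iff_has_vector_derivative[symmetric] using g by simp
  qed
  then show ?thesis by (simp add: F_def diff_divide_distrib)
qed

lemma int_cplus:
  fixes c p q g :: real
  assumes g: "g > -1" and pq: "p \<le> q" and qc: "0 \<le> c + p"
  shows "((\<lambda>a. (c + a) powr g) has_integral ((c+q) powr (g+1) - (c+p) powr (g+1)) / (g+1)) {p..q}"
proof -
  have "((\<lambda>a. (c + a) powr g) has_integral ((\<lambda>a. (c + a) powr (g+1) / (g+1)) q - (\<lambda>a. (c + a) powr (g+1) / (g+1)) p)) {p..q}"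
  proof (rule fundamental_theorem_of_calculus_interior[OF pq])
    show "continuous_on {p..q} (\<lambda>a. (c + a) powr (g + 1) / (g + 1))"
      using qc g by (intro continuous_intros continuous_on_powr') auto
    fix x assume x: "x \<in> {p<..<q}"
    then have "c + x > 0" using qc by auto
    have "((\<lambda>a. (c + a) powr (g+1)) has_real_derivative (g+1) * (c + x) powr (g + 1 - of_nat 1) * 1) (at x)"
      by (rule DERIV_fun_powr) (use \<open>c + x > 0\<close> in \<open>auto intro!: derivative_eq_intros\<close>)
    then have "((\<lambda>a. (c + a) powr (g + 1) / (g + 1)) has_real_derivative ((g+1) * (c + x) powr g / (g+1))) (at x)"
      using DERIV_cdivide by fastforce
    then show "((\<lambda>a. (c + a) powr (g + 1) / (g + 1)) has_vector_derivative (c + x) powr g) (at x)"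
      unfolding has_real_derivative_iff_has_vector_derivative[symmetric] using g by simp
  qed
  then show ?thesis by (simp add: diff_divide_distrib)
qed

lemma powr_diff_le:
  fixes x y b :: real
  assumes "0 < x" "x \<le> y" "0 < b" "b < 1"
  shows "y powr b - x powr b \<le> (y - x) * y powr (b - 1)"
proof -
  have "x powr (b - 1) \<ge> y powr (b - 1)" by (rule powr_mono2') (use assms in auto)
  then have "x * y powr (b-1) \<le> x * x powr (b - 1)" using assms by (intro mult_left_mono) auto
  also have "x * x powr (b-1) = x powr b" using assms by (simp add: powr_mult_base)
  finally have 1: "x * y powr (b-1) \<le> x powr b" .
  have "y powr b = y * y powr (b - 1)" using assms by (simp add: powr_mult_base)
  then show ?thesis using 1 by (simp add: algebra_simps)
qed

lemma int_on_open:
  fixes f g :: "real \<Rightarrow> real"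
  assumes "f \<in> borel_measurable borel" "g integrable_on {p..q}"
    "\<And>x. x \<in> {p<..<q} \<Longrightarrow> \<bar>f x\<bar> \<le> g x"
  shows "f integrable_on {p..q}"
proof -
  have fm: "f \<in> borel_measurable (lebesgue_on {p<..<q})"
    by (rule measurable_restrict_space1, rule measurable_completion) (use assms(1) in simp)
  have "f integrable_on {p<..<q}"
    using fm by (rule measurable_bounded_by_integrable_imp_integrable_real[where g=g])
       (use assms in \<open>auto simp: integrable_on_open_interval_real intro: measurable_completion measurable_restrict_space1\<close>)
  then show ?thesis by (simp add: integrable_on_open_interval_real)
qed

lemma int_le_open:
  fixes f g :: "real \<Rightarrow> real"
  assumes "f integrable_on {p..q}" "g integrable_on {p..q}"
    "\<And>x. x \<in> {p<..<q} \<Longrightarrow> f x \<le> g x"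
  shows "integral {p..q} f \<le> integral {p..q} g"
proof -
  have "integral {p<..<q} f \<le> integral {p<..<q} g"
    by (rule integral_le) (use assms in \<open>auto simp: integrable_on_open_interval_real\<close>)
  then show ?thesis by (simp add: integral_open_interval_real)
qed

definition fX :: "real \<Rightarrow> real \<Rightarrow> real \<Rightarrow> real \<Rightarrow> real" where
  "fX b u v a = (u - a) powr b * ((v + a) powr (-1/2) + (v - a) powr (-1/2))"

lemma fX_meas[measurable]: "fX b u v \<in> borel_measurable borel"
  unfolding fX_def by measurable

lemma fX_nonneg: "0 \<le> fX b u v a"
  unfolding fX_def by simp

lemma fX_bound:
  assumes "0 < a" "a < u" "u \<le> v"
  shows "fX b u v a \<le> 2 * (u - a) powr (b - 1/2)"
proof -
  have 1: "(v + a) powr (-1/2) \<le> (u - a) powr (-1/2)" by (rule powr_mono2') (use assms in auto)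
  have 2: "(v - a) powr (-1/2) \<le> (u - a) powr (-1/2)" by (rule powr_mono2') (use assms in auto)
  have "fX b u v a \<le> (u - a) powr b * (2 * (u - a) powr (-1/2))"
    unfolding fX_def using 1 2 by (intro mult_left_mono) auto
  also have "\<dots> = 2 * (u - a) powr (b - 1/2)"
    using assms by (simp add: powr_add[symmetric])
  finally show ?thesis .
qed

lemma fX_int:
  assumes b: "0 < b" and uv: "0 \<le> u" "u \<le> v"
  shows "fX b u v integrable_on {0..u}"
proof (rule int_on_open[OF fX_meas])
  have I: "((\<lambda>a. (u - a) powr (b - 1/2)) has_integral ((u-0) powr (b-1/2+1) - (u-u) powr (b-1/2+1)) / (b-1/2+1)) {0..u}"
    by (rule int_cminus) (use assms in auto)
  then show "(\<lambda>a. 2 * (u - a) powr (b - 1/2)) integrable_on {0..u}"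
    using has_integral_mult_right[OF I, of 2] by (auto simp: integrable_on_def)
  fix x assume "x \<in> {0<..<u}"
  then show "\<bar>fX b u v x\<bar> \<le> 2 * (u - x) powr (b - 1/2)"
    using fX_bound[of x u v b] fX_nonneg[of b u v x] uv by auto
qed

lemma fX_LBINT:
  assumes b: "0 < b" and uv: "0 \<le> u" "u \<le> v"
  shows "(LBINT a=0..u. fX b u v a) = integral {0..u} (fX b u v)"
  using LBINT_eq_HK[where f="fX b u v" and p=0 and q=u] fX_int[OF assms] uv fX_nonneg
  by (simp add: integrable_on_open_interval_real integral_open_interval_real zero_ereal_def)

lemma RX_fX:
  assumes "u \<le> v"
  shows "RX H u v = H / (2 * sqrt (2 * pi)) * (LBINT a=0..u. fX (2*H-1) u v a)"
    and "RX H v u = H / (2 * sqrt (2 * pi)) * (LBINT a=0..u. fX (2*H-1) u v a)"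
  using assms by (auto simp: RX_def fX_def Let_def min_def max_def)

lemma P1:
  fixes x y b G :: real
  assumes "0 < x" "x \<le> y" "0 < b" "b < 1" "0 \<le> G" "G \<le> 2 * y powr (-1/2)"
  shows "(y powr b - x powr b) * G \<le> 2 * (y - x) powr (1/2) * x powr (b - 1)"
proof -
  have d0: "0 \<le> y powr b - x powr b" using assms by (simp add: powr_mono2)
  have d1: "y powr b - x powr b \<le> (y - x) * y powr (b - 1)" by (rule powr_diff_le) (use assms in auto)
  have "(y powr b - x powr b) * G \<le> ((y - x) * y powr (b - 1)) * (2 * y powr (-1/2))"
    using d0 d1 assms by (intro mult_mono) auto
  also have "(y - x) = (y - x) powr (1/2) * (y - x) powr (1/2)"
    using assms by (simp add: powr_add[symmetric])
  also have "(y - x) powr (1/2) * (y - x) powr (1/2) \<le> (y - x) powr (1/2) * y powr (1/2)"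
    using assms by (intro mult_left_mono powr_mono2) auto
  hence "((y - x) powr (1/2) * (y - x) powr (1/2)) * y powr (b - 1) * (2 * y powr (-1/2))
      \<le> ((y - x) powr (1/2) * y powr (1/2)) * y powr (b - 1) * (2 * y powr (-1/2))"
    by (intro mult_right_mono) auto
  also have "((y - x) powr (1/2) * y powr (1/2)) * y powr (b - 1) * (2 * y powr (-1/2))
       = 2 * (y - x) powr (1/2) * (y powr (1/2) * y powr (b - 1) * y powr (-1/2))" by simp
  also have "y powr (1/2) * y powr (b - 1) * y powr (-1/2) = y powr (b - 1)"
    using assms by (simp add: powr_add[symmetric])
  also have "2 * (y - x) powr (1/2) * y powr (b - 1) \<le> 2 * (y - x) powr (1/2) * x powr (b - 1)"
    using assms by (intro mult_left_mono powr_mono2') auto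
  finally show ?thesis by simp
qed

lemma IX_est:
  fixes b s t T :: real
  assumes b: "0 < b" "b < 1" and st: "0 \<le> s" "s \<le> t" "t \<le> T"
  shows "integral {0..t} (fX b t t) + integral {0..s} (fX b s s) - 2 * integral {0..s} (fX b s t)
     \<le> (2 * T powr b / (b + 1/2) + 2 * T powr b / b + 2 * T powr b) * (t - s) powr (1/2)"
proof -
  define h where "h = t - s"
  have h0: "0 \<le> h" "h \<le> T" using st by (auto simp: h_def)
  have itt: "fX b t t integrable_on {0..t}" using fX_int[of b t t] b st by auto
  have itts: "fX b t t integrable_on {0..s}" by (rule integrable_on_subinterval[OF itt]) (use st in auto)
  have itt2: "fX b t t integrable_on {s..t}" by (rule integrable_on_subinterval[OF itt]) (use st in auto)
  have iss: "fX b s s integrable_on {0..s}" using fX_int[of b s s] b st by auto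
  have ist: "fX b s t integrable_on {0..s}" using fX_int[of b s t] b st by auto
  have split: "integral {0..t} (fX b t t) = integral {0..s} (fX b t t) + integral {s..t} (fX b t t)"
    using Henstock_Kurzweil_Integration.integral_combine[OF st(1) st(2) itt] by simp
  have Ia: "((\<lambda>a. (t - a) powr (b - 1/2)) has_integral ((t-s) powr (b-1/2+1) - (t-t) powr (b-1/2+1)) / (b-1/2+1)) {s..t}"
    by (rule int_cminus) (use b st in auto)
  have Ia': "((\<lambda>a. 2 * (t - a) powr (b - 1/2)) has_integral 2 * (h powr (b + 1/2) / (b + 1/2))) {s..t}"
    using has_integral_mult_right[OF Ia, of 2] b by (simp add: h_def add_ac)
  have a1: "integral {s..t} (fX b t t) \<le> 2 * (h powr (b + 1/2) / (b + 1/2))"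
  proof -
    have "integral {s..t} (fX b t t) \<le> integral {s..t} (\<lambda>a. 2 * (t - a) powr (b - 1/2))"
      by (rule int_le_open[OF itt2]) (use Ia' fX_bound[of _ t t b] st in \<open>auto simp: integrable_on_def\<close>)
    then show ?thesis using integral_unique[OF Ia'] by linarith
  qed
  have "h powr (b + 1/2) = h powr b * h powr (1/2)" using h0 by (simp add: powr_add)
  also have "\<dots> \<le> T powr b * h powr (1/2)" using h0 b by (intro mult_right_mono powr_mono2) auto
  finally have "2 * (h powr (b + 1/2) / (b + 1/2)) \<le> 2 * (T powr b * h powr (1/2) / (b + 1/2))"
    using b by (intro mult_left_mono divide_right_mono) auto
  then have a2: "integral {s..t} (fX b t t) \<le> 2 * T powr b / (b + 1/2) * h powr (1/2)"
    using a1 by simp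
  have Ib: "((\<lambda>a. (s - a) powr (b - 1)) has_integral ((s-0) powr (b-1+1) - (s-s) powr (b-1+1)) / (b-1+1)) {0..s}"
    by (rule int_cminus) (use b st in auto)
  have Ib': "((\<lambda>a. 2 * h powr (1/2) * (s - a) powr (b - 1)) has_integral 2 * h powr (1/2) * (s powr b / b)) {0..s}"
    using has_integral_mult_right[OF Ib, of "2 * h powr (1/2)"] b by simp
  have b1: "integral {0..s} (fX b t t) - integral {0..s} (fX b s t) \<le> 2 * h powr (1/2) * (s powr b / b)"
  proof -
    have "integral {0..s} (fX b t t) - integral {0..s} (fX b s t) = integral {0..s} (\<lambda>a. fX b t t a - fX b s t a)"
      using integral_diff[OF itts ist] by simp
    also have "\<dots> \<le> integral {0..s} (\<lambda>a. 2 * h powr (1/2) * (s - a) powr (b - 1))"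
    proof (rule int_le_open)
      show "(\<lambda>a. fX b t t a - fX b s t a) integrable_on {0..s}" using itts ist by (rule integrable_diff)
      show "(\<lambda>a. 2 * h powr (1/2) * (s - a) powr (b - 1)) integrable_on {0..s}" using Ib' by (auto simp: integrable_on_def)
      fix a assume a: "a \<in> {0<..<s}"
      define G where "G = (t + a) powr (-1/2) + (t - a) powr (-1/2)"
      have "G \<le> 2 * (t - a) powr (-1/2)"
        unfolding G_def using a st by (auto intro: powr_mono2')
      moreover have "fX b t t a - fX b s t a = ((t - a) powr b - (s - a) powr b) * G"
        by (simp add: fX_def G_def algebra_simps)
      ultimately show "fX b t t a - fX b s t a \<le> 2 * h powr (1/2) * (s - a) powr (b - 1)"
        using P1[of "s - a" "t - a" b G] a st b by (auto simp: G_def h_def)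
    qed
    also have "\<dots> = 2 * h powr (1/2) * (s powr b / b)" by (rule integral_unique[OF Ib'])
    finally show ?thesis .
  qed
  have b2: "2 * h powr (1/2) * (s powr b / b) \<le> 2 * T powr b / b * h powr (1/2)"
  proof -
    have "s powr b \<le> T powr b" using st b by (intro powr_mono2) auto
    then have "s powr b / b \<le> T powr b / b" using b by (simp add: divide_right_mono)
    then have "2 * h powr (1/2) * (s powr b / b) \<le> 2 * h powr (1/2) * (T powr b / b)"
      by (intro mult_left_mono) auto
    then show ?thesis by (simp add: mult_ac)
  qed
  define D where "D = (\<lambda>a. (s + a) powr (-1/2) - (t + a) powr (-1/2) + ((s - a) powr (-1/2) - (t - a) powr (-1/2)))"
  have I1: "((\<lambda>a. (s + a) powr (-1/2)) has_integral ((s+s) powr (-1/2+1) - (s+0) powr (-1/2+1)) / (-1/2+1)) {0..s}"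
    by (rule int_cplus) (use st in auto)
  have I2: "((\<lambda>a. (t + a) powr (-1/2)) has_integral ((t+s) powr (-1/2+1) - (t+0) powr (-1/2+1)) / (-1/2+1)) {0..s}"
    by (rule int_cplus) (use st in auto)
  have I3: "((\<lambda>a. (s - a) powr (-1/2)) has_integral ((s-0) powr (-1/2+1) - (s-s) powr (-1/2+1)) / (-1/2+1)) {0..s}"
    by (rule int_cminus) (use st in auto)
  have I4: "((\<lambda>a. (t - a) powr (-1/2)) has_integral ((t-0) powr (-1/2+1) - (t-s) powr (-1/2+1)) / (-1/2+1)) {0..s}"
    by (rule int_cminus) (use st in auto)
  have ID: "(D has_integral (((s+s) powr (1/2) - s powr (1/2)) * 2 - ((t+s) powr (1/2) - t powr (1/2)) * 2
                + ((s powr (1/2)) * 2 - (t powr (1/2) - h powr (1/2)) * 2))) {0..s}"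
    unfolding D_def using has_integral_add[OF has_integral_diff[OF I1 I2] has_integral_diff[OF I3 I4]]
    by (simp add: h_def)
  have Dv: "(((s+s) powr (1/2) - s powr (1/2)) * 2 - ((t+s) powr (1/2) - t powr (1/2)) * 2
                + ((s powr (1/2)) * 2 - (t powr (1/2) - h powr (1/2)) * 2)) \<le> 2 * h powr (1/2)"
  proof -
    have "(s+s) powr (1/2) \<le> (t+s) powr (1/2)" using st by (intro powr_mono2) auto
    then show ?thesis by simp
  qed
  have ID': "((\<lambda>a. T powr b * D a) has_integral T powr b * (((s+s) powr (1/2) - s powr (1/2)) * 2 - ((t+s) powr (1/2) - t powr (1/2)) * 2
                + ((s powr (1/2)) * 2 - (t powr (1/2) - h powr (1/2)) * 2))) {0..s}"
    by (rule has_integral_mult_right[OF ID])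
  have c1: "integral {0..s} (fX b s s) - integral {0..s} (fX b s t) \<le> 2 * T powr b * h powr (1/2)"
  proof -
    have "integral {0..s} (fX b s s) - integral {0..s} (fX b s t) = integral {0..s} (\<lambda>a. fX b s s a - fX b s t a)"
      using integral_diff[OF iss ist] by simp
    also have "\<dots> \<le> integral {0..s} (\<lambda>a. T powr b * D a)"
    proof (rule int_le_open)
      show "(\<lambda>a. fX b s s a - fX b s t a) integrable_on {0..s}" using iss ist by (rule integrable_diff)
      show "(\<lambda>a. T powr b * D a) integrable_on {0..s}" using ID' by (auto simp: integrable_on_def)
      fix a assume a: "a \<in> {0<..<s}"
      have e: "fX b s s a - fX b s t a = (s - a) powr b * D a"
        by (simp add: fX_def D_def algebra_simps)
      have D0: "0 \<le> D a"
      proof -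
        have "(t + a) powr (-1/2) \<le> (s + a) powr (-1/2)" using a st by (intro powr_mono2') auto
        moreover have "(t - a) powr (-1/2) \<le> (s - a) powr (-1/2)" using a st by (intro powr_mono2') auto
        ultimately show ?thesis by (simp add: D_def)
      qed
      have "(s - a) powr b \<le> T powr b" using a st b by (intro powr_mono2) auto
      then show "fX b s s a - fX b s t a \<le> T powr b * D a" unfolding e using D0 by (intro mult_right_mono) auto
    qed
    also have "\<dots> = T powr b * (((s+s) powr (1/2) - s powr (1/2)) * 2 - ((t+s) powr (1/2) - t powr (1/2)) * 2
                + ((s powr (1/2)) * 2 - (t powr (1/2) - h powr (1/2)) * 2))" by (rule integral_unique[OF ID'])
    also have "\<dots> \<le> T powr b * (2 * h powr (1/2))"
      using Dv by (intro mult_left_mono) auto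
    finally show ?thesis by simp
  qed
  have "integral {0..t} (fX b t t) + integral {0..s} (fX b s s) - 2 * integral {0..s} (fX b s t)
      = integral {s..t} (fX b t t) + (integral {0..s} (fX b t t) - integral {0..s} (fX b s t))
        + (integral {0..s} (fX b s s) - integral {0..s} (fX b s t))"
    using split by simp
  also have "\<dots> \<le> 2 * T powr b / (b + 1/2) * h powr (1/2) + 2 * T powr b / b * h powr (1/2) + 2 * T powr b * h powr (1/2)"
    using a2 b1 b2 c1 by linarith
  also have "\<dots> = (2 * T powr b / (b + 1/2) + 2 * T powr b / b + 2 * T powr b) * (t - s) powr (1/2)"
    by (simp add: h_def algebra_simps)
  finally show ?thesis .
qed

definition fY :: "real \<Rightarrow> real \<Rightarrow> real \<Rightarrow> real \<Rightarrow> real" where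
  "fY b u v a = (u - a) powr (-1/2) * ((v + a) powr b - (v - a) powr b)"

lemma fY_meas[measurable]: "fY b u v \<in> borel_measurable borel"
  unfolding fY_def by measurable

lemma fY_nonneg: assumes "0 \<le> a" "a \<le> v" "0 < b" shows "0 \<le> fY b u v a"
  unfolding fY_def using assms by (intro mult_nonneg_nonneg) (auto intro!: powr_mono2)

lemma fY_bound:
  assumes "0 < a" "a < u" "u \<le> v" "0 < b" "v \<le> T"
  shows "fY b u v a \<le> (2 * T) powr b * (u - a) powr (-1/2)"
proof -
  have "(v + a) powr b - (v - a) powr b \<le> (2 * T) powr b"
    using assms by (smt (verit) powr_ge_zero powr_mono2)
  then have "(u - a) powr (-1/2) * ((v + a) powr b - (v - a) powr b) \<le> (u - a) powr (-1/2) * (2 * T) powr b"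
    by (intro mult_left_mono) auto
  then show ?thesis unfolding fY_def by (simp only: mult.commute)
qed

lemma fY_int:
  assumes b: "0 < b" and uv: "0 \<le> u" "u \<le> v" "v \<le> T"
  shows "fY b u v integrable_on {0..u}"
proof (rule int_on_open[OF fY_meas])
  have I: "((\<lambda>a. (u - a) powr (-1/2)) has_integral ((u-0) powr (-1/2+1) - (u-u) powr (-1/2+1)) / (-1/2+1)) {0..u}"
    by (rule int_cminus) (use assms in auto)
  then show "(\<lambda>a. (2 * T) powr b * (u - a) powr (-1/2)) integrable_on {0..u}"
    using has_integral_mult_right[OF I, of "(2 * T) powr b"] by (auto simp: integrable_on_def)
  fix x assume "x \<in> {0<..<u}"
  then show "\<bar>fY b u v x\<bar> \<le> (2 * T) powr b * (u - x) powr (-1/2)"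
    using fY_bound[of x u v b T] fY_nonneg[of x v b u] uv b by auto
qed

lemma fY_LBINT:
  assumes b: "0 < b" and uv: "0 \<le> u" "u \<le> v" "v \<le> T"
  shows "(LBINT a=0..u. fY b u v a) = integral {0..u} (fY b u v)"
  using LBINT_eq_HK[where f="fY b u v" and p=0 and q=u] fY_int[OF assms] uv fY_nonneg[of _ v b u] b
  by (simp add: integrable_on_open_interval_real integral_open_interval_real zero_ereal_def)

lemma RY_fY:
  assumes "u \<le> v"
  shows "RY H u v = H / (2 * sqrt (2 * pi)) * (LBINT a=0..u. fY (2*H-1) u v a)"
    and "RY H v u = H / (2 * sqrt (2 * pi)) * (LBINT a=0..u. fY (2*H-1) u v a)"
  using assms by (auto simp: RY_def fY_def Let_def min_def max_def)

lemma P2: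
  fixes x y b T :: real
  assumes "0 < x" "x \<le> y" "y \<le> T" "0 < b" "b < 1"
  shows "x powr (-1/2) * ((y - x) * y powr (b - 1))
      \<le> (y - x) powr (1/2) * (x powr (b - 1) + T powr (b - 1/2) * x powr (-1/2))"
proof -
  have "(y - x) = (y - x) powr (1/2) * (y - x) powr (1/2)"
    using assms by (simp add: powr_add[symmetric])
  also have "\<dots> \<le> (y - x) powr (1/2) * y powr (1/2)"
    using assms by (intro mult_left_mono powr_mono2) auto
  finally have "x powr (-1/2) * ((y - x) * y powr (b - 1)) \<le> x powr (-1/2) * (((y - x) powr (1/2) * y powr (1/2)) * y powr (b - 1))"
    by (intro mult_left_mono mult_right_mono) auto
  also have "\<dots> = (y - x) powr (1/2) * (x powr (-1/2) * y powr (b - 1/2))"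
    using assms by (simp add: powr_add[symmetric] mult_ac)
  also have "x powr (-1/2) * y powr (b - 1/2) \<le> x powr (b - 1) + T powr (b - 1/2) * x powr (-1/2)"
  proof (cases "b \<le> 1/2")
    case True
    have "y powr (b - 1/2) \<le> x powr (b - 1/2)" using True assms by (intro powr_mono2') auto
    then have "x powr (-1/2) * y powr (b - 1/2) \<le> x powr (-1/2) * x powr (b - 1/2)" by (intro mult_left_mono) auto
    also have "\<dots> = x powr (b - 1)" using assms by (simp add: powr_add[symmetric])
    finally show ?thesis by (smt (verit) mult_nonneg_nonneg powr_ge_zero)
  next
    case False
    have "y powr (b - 1/2) \<le> T powr (b - 1/2)" using False assms by (intro powr_mono2) auto
    then have "x powr (-1/2) * y powr (b - 1/2) \<le> T powr (b - 1/2) * x powr (-1/2)"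
      by (simp add: mult_left_mono mult.commute)
    then show ?thesis by (smt (verit) powr_ge_zero)
  qed
  then have "(y - x) powr (1/2) * (x powr (-1/2) * y powr (b - 1/2)) \<le> (y - x) powr (1/2) * (x powr (b - 1) + T powr (b - 1/2) * x powr (-1/2))"
    by (intro mult_left_mono) auto
  finally show ?thesis .
qed

lemma IY_est:
  fixes b s t T :: real
  assumes b: "0 < b" "b < 1" and st: "0 \<le> s" "s \<le> t" "t \<le> T"
  shows "integral {0..t} (fY b t t) + integral {0..s} (fY b s s) - 2 * integral {0..s} (fY b s t)
     \<le> (2 * (2 * T) powr b + T powr b / b + 2 * T powr (b - 1/2) * T powr (1/2)) * (t - s) powr (1/2)"
proof -
  define h where "h = t - s"
  have h0: "0 \<le> h" "h \<le> T" using st by (auto simp: h_def)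
  have itt: "fY b t t integrable_on {0..t}" using fY_int[of b t t T] b st by auto
  have itts: "fY b t t integrable_on {0..s}" by (rule integrable_on_subinterval[OF itt]) (use st in auto)
  have itt2: "fY b t t integrable_on {s..t}" by (rule integrable_on_subinterval[OF itt]) (use st in auto)
  have iss: "fY b s s integrable_on {0..s}" using fY_int[of b s s T] b st by auto
  have ist: "fY b s t integrable_on {0..s}" using fY_int[of b s t T] b st by auto
  have split: "integral {0..t} (fY b t t) = integral {0..s} (fY b t t) + integral {s..t} (fY b t t)"
    using Henstock_Kurzweil_Integration.integral_combine[OF st(1) st(2) itt] by simp
  have Ia: "((\<lambda>a. (t - a) powr (-1/2)) has_integral ((t-s) powr (-1/2+1) - (t-t) powr (-1/2+1)) / (-1/2+1)) {s..t}"
    by (rule int_cminus) (use b st in auto)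
  have Ia': "((\<lambda>a. (2 * T) powr b * (t - a) powr (-1/2)) has_integral (2 * T) powr b * (2 * h powr (1/2))) {s..t}"
    using has_integral_mult_right[OF Ia, of "(2 * T) powr b"] b by (simp add: h_def mult.commute)
  have a1: "integral {s..t} (fY b t t) \<le> (2 * T) powr b * (2 * h powr (1/2))"
  proof -
    have "integral {s..t} (fY b t t) \<le> integral {s..t} (\<lambda>a. (2 * T) powr b * (t - a) powr (-1/2))"
      by (rule int_le_open[OF itt2]) (use Ia' fY_bound[of _ t t b T] st b in \<open>auto simp: integrable_on_def\<close>)
    then show ?thesis using integral_unique[OF Ia'] by linarith
  qed
  have b1: "integral {0..s} (fY b t t) - integral {0..s} (fY b s t) \<le> 0"
  proof -
    have "integral {0..s} (fY b t t) - integral {0..s} (fY b s t) = integral {0..s} (\<lambda>a. fY b t t a - fY b s t a)"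
      using integral_diff[OF itts ist] by simp
    also have "\<dots> \<le> integral {0..s} (\<lambda>a. 0)"
    proof (rule int_le_open)
      show "(\<lambda>a. fY b t t a - fY b s t a) integrable_on {0..s}" using itts ist by (rule integrable_diff)
      show "(\<lambda>a. 0::real) integrable_on {0..s}" by (rule integrable_0)
      fix a assume a: "a \<in> {0<..<s}"
      have p: "0 \<le> (t + a) powr b - (t - a) powr b" using a st b by (auto intro!: powr_mono2)
      have q: "(t - a) powr (-1/2) \<le> (s - a) powr (-1/2)" using a st by (intro powr_mono2') auto
      have "fY b t t a - fY b s t a = ((t - a) powr (-1/2) - (s - a) powr (-1/2)) * ((t + a) powr b - (t - a) powr b)"
        by (simp add: fY_def algebra_simps)
      also have "\<dots> \<le> 0" using p q by (simp add: mult_nonpos_nonneg)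
      finally show "fY b t t a - fY b s t a \<le> 0" .
    qed
    finally show ?thesis by simp
  qed
  define K where "K = T powr (b - 1/2)"
  have Ic1: "((\<lambda>a. (s - a) powr (b - 1)) has_integral ((s-0) powr (b-1+1) - (s-s) powr (b-1+1)) / (b-1+1)) {0..s}"
    by (rule int_cminus) (use b st in auto)
  have Ic2: "((\<lambda>a. (s - a) powr (-1/2)) has_integral ((s-0) powr (-1/2+1) - (s-s) powr (-1/2+1)) / (-1/2+1)) {0..s}"
    by (rule int_cminus) (use b st in auto)
  have Ic: "((\<lambda>a. h powr (1/2) * ((s - a) powr (b - 1) + K * (s - a) powr (-1/2))) has_integral
             h powr (1/2) * (s powr b / b + K * (2 * s powr (1/2)))) {0..s}"
    using has_integral_mult_right[OF has_integral_add[OF Ic1 has_integral_mult_right[OF Ic2, of K]], of "h powr (1/2)"] b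
    by (simp add: mult.commute)
  have c1: "integral {0..s} (fY b s s) - integral {0..s} (fY b s t) \<le> h powr (1/2) * (s powr b / b + K * (2 * s powr (1/2)))"
  proof -
    have "integral {0..s} (fY b s s) - integral {0..s} (fY b s t) = integral {0..s} (\<lambda>a. fY b s s a - fY b s t a)"
      using integral_diff[OF iss ist] by simp
    also have "\<dots> \<le> integral {0..s} (\<lambda>a. h powr (1/2) * ((s - a) powr (b - 1) + K * (s - a) powr (-1/2)))"
    proof (rule int_le_open)
      show "(\<lambda>a. fY b s s a - fY b s t a) integrable_on {0..s}" using iss ist by (rule integrable_diff)
      show "(\<lambda>a. h powr (1/2) * ((s - a) powr (b - 1) + K * (s - a) powr (-1/2))) integrable_on {0..s}"
        using Ic by (auto simp: integrable_on_def)
      fix a assume a: "a \<in> {0<..<s}"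
      have e: "fY b s s a - fY b s t a = (s - a) powr (-1/2) * (((s + a) powr b - (t + a) powr b) + ((t - a) powr b - (s - a) powr b))"
        by (simp add: fY_def algebra_simps)
      have m1: "(s + a) powr b - (t + a) powr b \<le> 0" using a st b by (simp add: powr_mono2)
      have m2: "(t - a) powr b - (s - a) powr b \<le> ((t - a) - (s - a)) * (t - a) powr (b - 1)"
        by (rule powr_diff_le) (use a st b in auto)
      have "fY b s s a - fY b s t a \<le> (s - a) powr (-1/2) * (((t - a) - (s - a)) * (t - a) powr (b - 1))"
        unfolding e using m1 m2 by (intro mult_left_mono) auto
      also have "\<dots> \<le> ((t - a) - (s - a)) powr (1/2) * ((s - a) powr (b - 1) + T powr (b - 1/2) * (s - a) powr (-1/2))"
        by (rule P2) (use a st b in auto)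
      finally show "fY b s s a - fY b s t a \<le> h powr (1/2) * ((s - a) powr (b - 1) + K * (s - a) powr (-1/2))"
        by (simp add: h_def K_def)
    qed
    also have "\<dots> = h powr (1/2) * (s powr b / b + K * (2 * s powr (1/2)))" by (rule integral_unique[OF Ic])
    finally show ?thesis .
  qed
  have c2: "h powr (1/2) * (s powr b / b + K * (2 * s powr (1/2))) \<le> h powr (1/2) * (T powr b / b + 2 * K * T powr (1/2))"
  proof -
    have "s powr b \<le> T powr b" using st b by (intro powr_mono2) auto
    then have 1: "s powr b / b \<le> T powr b / b" using b by (simp add: divide_right_mono)
    have "s powr (1/2) \<le> T powr (1/2)" using st by (intro powr_mono2) auto
    then have 2: "K * (2 * s powr (1/2)) \<le> 2 * K * T powr (1/2)" unfolding K_def by (simp add: mult_right_mono)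
    show ?thesis using 1 2 by (intro mult_left_mono) auto
  qed
  have "integral {0..t} (fY b t t) + integral {0..s} (fY b s s) - 2 * integral {0..s} (fY b s t)
      = integral {s..t} (fY b t t) + (integral {0..s} (fY b t t) - integral {0..s} (fY b s t))
        + (integral {0..s} (fY b s s) - integral {0..s} (fY b s t))"
    using split by simp
  also have "\<dots> \<le> (2 * T) powr b * (2 * h powr (1/2)) + 0 + h powr (1/2) * (T powr b / b + 2 * K * T powr (1/2))"
    using a1 b1 c1 c2 by linarith
  also have "\<dots> = (2 * (2 * T) powr b + T powr b / b + 2 * T powr (b - 1/2) * T powr (1/2)) * (t - s) powr (1/2)"
    by (simp add: h_def K_def algebra_simps)
  finally show ?thesis .
qed

lemma gp_incr:
  fixes M :: "'a measure" and X :: "real \<Rightarrow> 'a \<Rightarrow> real"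
  assumes P: "prob_space M" and cgp: "centered_gaussian_process M T X R"
    and sym: "\<And>a b. R a b = R b a" and st: "s \<in> {0..T}" "t \<in> {0..T}"
  shows "0 \<le> R t t + R s s - 2 * R s t"
    and "integrable M (\<lambda>\<omega>. (X t \<omega> - X s \<omega>)^(2*k))"
    and "(\<integral>\<omega>. (X t \<omega> - X s \<omega>)^(2*k) \<partial>M) = fact (2*k) / (2^k * fact k) * (R t t + R s s - 2 * R s t)^k"
proof -
  interpret prob_space M by (rule P)
  define v where "v = R t t + R s s - 2 * R s t"
  define ts where "ts = (\<lambda>i::nat. if i = 0 then t else s)"
  define c where "c = (\<lambda>i::nat. if i = 0 then (1::real) else -1)"
  have tsin: "\<forall>i<2. ts i \<in> {0..T}" using st by (auto simp: ts_def)
  have Zeq: "(\<lambda>\<omega>. \<Sum>i<2. c i * X (ts i) \<omega>) = (\<lambda>\<omega>. X t \<omega> - X s \<omega>)"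
    by (auto simp: c_def ts_def numeral_2_eq_2)
  have veq: "(\<Sum>i<2. \<Sum>j<2. c i * c j * R (ts i) (ts j)) = v"
    using sym[of s t] by (auto simp: c_def ts_def numeral_2_eq_2 v_def)
  have m0: "\<forall>t\<in>{0..T}. X t \<in> borel_measurable M"
    using cgp unfolding centered_gaussian_process_def by (rule conjunct1)
  have meas: "X t \<in> borel_measurable M" "X s \<in> borel_measurable M"
    using m0 st by auto
  have g0: "\<forall>(n::nat) (ts::nat \<Rightarrow> real) (c::nat \<Rightarrow> real). (\<forall>i<n. ts i \<in> {0..T}) \<longrightarrow>
        (let Z = (\<lambda>\<omega>. \<Sum>i<n. c i * X (ts i) \<omega>);
             v = (\<Sum>i<n. \<Sum>j<n. c i * c j * R (ts i) (ts j))
         in v \<ge> 0 \<and>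
            (if v = 0 then (AE \<omega> in M. Z \<omega> = 0)
             else distributed M lborel Z (\<lambda>x. ennreal (normal_density 0 (sqrt v) x))))"
    using cgp unfolding centered_gaussian_process_def by (rule conjunct2)
  have G: "v \<ge> 0 \<and> (if v = 0 then (AE \<omega> in M. X t \<omega> - X s \<omega> = 0)
             else distributed M lborel (\<lambda>\<omega>. X t \<omega> - X s \<omega>) (\<lambda>x. ennreal (normal_density 0 (sqrt v) x)))"
  proof -
    have "let Z = (\<lambda>\<omega>. \<Sum>i<2. c i * X (ts i) \<omega>);
             v = (\<Sum>i<2. \<Sum>j<2. c i * c j * R (ts i) (ts j))
         in v \<ge> 0 \<and>
            (if v = 0 then (AE \<omega> in M. Z \<omega> = 0)
             else distributed M lborel Z (\<lambda>x. ennreal (normal_density 0 (sqrt v) x)))"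
      using g0 tsin by blast
    then show ?thesis unfolding Let_def Zeq veq .
  qed
  then show "0 \<le> R t t + R s s - 2 * R s t" by (simp add: v_def)
  have "integrable M (\<lambda>\<omega>. (X t \<omega> - X s \<omega>)^(2*k)) \<and>
        (\<integral>\<omega>. (X t \<omega> - X s \<omega>)^(2*k) \<partial>M) = fact (2*k) / (2^k * fact k) * v^k"
  proof (cases "v = 0")
    case True
    then have ae: "AE \<omega> in M. X t \<omega> - X s \<omega> = 0" using G by simp
    show ?thesis
    proof (cases "k = 0")
      case True then show ?thesis by (simp add: prob_space)
    next
      case False
      have ae2: "AE \<omega> in M. (X t \<omega> - X s \<omega>)^(2*k) = 0" using ae by eventually_elim (use False in simp)
      have "integrable M (\<lambda>\<omega>. (X t \<omega> - X s \<omega>)^(2*k))"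
        using integrable_cong_AE[OF _ _ ae2] meas by simp
      moreover have "(\<integral>\<omega>. (X t \<omega> - X s \<omega>)^(2*k) \<partial>M) = 0"
        using integral_cong_AE[OF _ _ ae2] meas by simp
      ultimately show ?thesis using False \<open>v = 0\<close> by simp
    qed
  next
    case False
    then have vp: "v > 0" using G by simp
    have D: "distributed M lborel (\<lambda>\<omega>. X t \<omega> - X s \<omega>) (\<lambda>x. ennreal (normal_density 0 (sqrt v) x))"
      using G False by simp
    have sq: "0 < sqrt v" using vp by simp
    have nm: "has_bochner_integral lborel (\<lambda>x. normal_density 0 (sqrt v) x * (x - 0) ^ (2 * k))
              (fact (2 * k) / ((2 / (sqrt v)\<^sup>2)^k * fact k))"
      by (rule normal_moment_even[OF sq])
    have "integrable lborel (\<lambda>x. normal_density 0 (sqrt v) x * x ^ (2 * k))"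
      using nm by (simp add: has_bochner_integral_iff)
    then have i: "integrable M (\<lambda>\<omega>. (X t \<omega> - X s \<omega>)^(2*k))"
      using distributed_integrable[OF D, of "\<lambda>x. x ^ (2*k)"] by simp
    have "(\<integral>\<omega>. (X t \<omega> - X s \<omega>)^(2*k) \<partial>M) = (\<integral>x. normal_density 0 (sqrt v) x * x ^ (2 * k) \<partial>lborel)"
      using distributed_integral[OF D, of "\<lambda>x. x ^ (2*k)"] by simp
    also have "\<dots> = fact (2 * k) / ((2 / (sqrt v)\<^sup>2)^k * fact k)"
      using has_bochner_integral_integral_eq[OF nm] by simp
    also have "\<dots> = fact (2*k) / (2^k * fact k) * v^k"
      using vp by (simp add: power_divide)
    finally show ?thesis using i by simp
  qed
  then show "integrable M (\<lambda>\<omega>. (X t \<omega> - X s \<omega>)^(2*k))"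
    and "(\<integral>\<omega>. (X t \<omega> - X s \<omega>)^(2*k) \<partial>M) = fact (2*k) / (2^k * fact k) * (R t t + R s s - 2 * R s t)^k"
    by (auto simp: v_def)
qed

definition dy :: "real \<Rightarrow> nat \<Rightarrow> real \<Rightarrow> real" where
  "dy T n t = T * of_int \<lfloor>2^n * t / T\<rfloor> / 2^n"

lemma floor_bounds:
  fixes T t :: real
  assumes "T > 0" "t \<in> {0..T}"
  shows "0 \<le> \<lfloor>2^n * t / T\<rfloor>" "\<lfloor>2^n * t / T\<rfloor> \<le> 2^n"
proof -
  have "0 \<le> 2^n * t / T" using assms by auto
  then show "0 \<le> \<lfloor>2^n * t / T\<rfloor>" by simp
  have "2^n * t / T \<le> 2^n" using assms by (simp add: divide_le_eq)
  then have "\<lfloor>2^n * t / T\<rfloor> \<le> \<lfloor>(2::real)^n\<rfloor>" by (rule floor_mono)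
  then show "\<lfloor>2^n * t / T\<rfloor> \<le> 2^n" by simp
qed

lemma floor_double: "\<lfloor>2 * x\<rfloor> = 2 * \<lfloor>x\<rfloor> \<or> \<lfloor>2 * x\<rfloor> = 2 * \<lfloor>x\<rfloor> + 1" for x :: real
proof -
  have a: "of_int \<lfloor>x\<rfloor> \<le> x" "x < of_int \<lfloor>x\<rfloor> + 1" by linarith+
  have b: "of_int \<lfloor>2*x\<rfloor> \<le> 2*x" "2*x < of_int \<lfloor>2*x\<rfloor> + 1" by linarith+
  have "2 * \<lfloor>x\<rfloor> \<le> \<lfloor>2*x\<rfloor>" using a b by linarith
  moreover have "\<lfloor>2*x\<rfloor> \<le> 2 * \<lfloor>x\<rfloor> + 1" using a b by linarith
  ultimately show ?thesis by linarith
qed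

locale dyadic =
  fixes f :: "real \<Rightarrow> real" and T q :: real and N :: nat
  assumes T: "T > 0" and q: "0 < q" "q < 1"
    and hyp: "\<And>n i. n \<ge> N \<Longrightarrow> i < (2::nat)^n \<Longrightarrow> \<bar>f (T * (real i + 1) / 2^n) - f (T * real i / 2^n)\<bar> \<le> q^n"
begin

lemma adj:
  assumes "n \<ge> N" "0 \<le> k" "j = k \<or> j = k + 1" "j \<le> 2^n"
  shows "\<bar>f (T * of_int j / 2^n) - f (T * of_int k / 2^n)\<bar> \<le> q^n"
  using assms(3)
proof
  assume "j = k" then show ?thesis using q by simp
next
  assume j: "j = k + 1"
  define i where "i = nat k"
  have ik: "real i = of_int k" using assms(2) by (simp add: i_def)
  have "int i < 2^n" using assms j by (simp add: i_def)
  then have "i < 2^n" by (metis of_nat_less_iff of_nat_numeral of_nat_power)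
  then have "\<bar>f (T * (real i + 1) / 2^n) - f (T * real i / 2^n)\<bar> \<le> q^n" by (rule hyp[OF assms(1)])
  then show ?thesis using ik j by simp
qed

lemma step1:
  assumes "n \<ge> N" "t \<in> {0..T}"
  shows "\<bar>f (dy T (Suc n) t) - f (dy T n t)\<bar> \<le> q^(Suc n)"
proof -
  define k where "k = \<lfloor>2^n * t / T\<rfloor>"
  define j where "j = \<lfloor>2^(Suc n) * t / T\<rfloor>"
  have "j = \<lfloor>2 * (2^n * t / T)\<rfloor>" unfolding j_def by (simp add: mult_ac)
  then have jk: "j = 2*k \<or> j = 2*k + 1" using floor_double[of "2^n * t / T"] unfolding k_def by simp
  have k0: "0 \<le> k" using floor_bounds[OF T assms(2)] by (simp add: k_def)
  have jb: "j \<le> 2^(Suc n)" using floor_bounds[OF T assms(2), of "Suc n"] by (simp add: j_def)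
  have e1: "dy T n t = T * of_int (2*k) / 2^(Suc n)" by (simp add: dy_def k_def)
  have e2: "dy T (Suc n) t = T * of_int j / 2^(Suc n)" by (simp add: dy_def j_def)
  show ?thesis unfolding e1 e2 by (rule adj) (use assms k0 jk jb in auto)
qed

definition g :: "real \<Rightarrow> real" where "g t = lim (\<lambda>n. f (dy T n t))"

lemma conv_tail:
  assumes t: "t \<in> {0..T}"
  shows "(\<lambda>n. f (dy T n t)) \<longlonglongrightarrow> g t"
    and "\<And>n. n \<ge> N \<Longrightarrow> \<bar>g t - f (dy T n t)\<bar> \<le> q^n / (1 - q)"
proof -
  define a where "a j = f (dy T (Suc j) t) - f (dy T j t)" for j
  have ab: "\<bar>a j\<bar> \<le> q^(Suc j)" if "j \<ge> N" for j using step1[OF that t] by (simp add: a_def)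
  have sq: "summable (\<lambda>j. q^(Suc j))" using q by (simp add: summable_geometric)
  have sa: "summable a" by (rule summable_comparison_test'[OF sq, of N]) (use ab in auto)
  have tel: "f (dy T n t) = f (dy T 0 t) + (\<Sum>j<n. a j)" for n
    unfolding a_def by (subst sum_lessThan_telescope[where f="\<lambda>j. f (dy T j t)"]) simp
  have fe: "(\<lambda>n. f (dy T n t)) = (\<lambda>n. f (dy T 0 t) + (\<Sum>j<n. a j))" by (rule ext) (rule tel)
  have L: "(\<lambda>n. f (dy T n t)) \<longlonglongrightarrow> f (dy T 0 t) + suminf a"
    unfolding fe by (intro tendsto_add tendsto_const summable_LIMSEQ[OF sa])
  then have gt: "g t = f (dy T 0 t) + suminf a" unfolding g_def by (rule limI)
  then show "(\<lambda>n. f (dy T n t)) \<longlonglongrightarrow> g t" using L by simp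
  fix n assume n: "n \<ge> N"
  have "g t - f (dy T n t) = suminf a - (\<Sum>j<n. a j)" using gt tel[of n] by linarith
  also have "\<dots> = (\<Sum>j. a (j + n))" using suminf_split_initial_segment[OF sa, of n] by simp
  finally have e: "g t - f (dy T n t) = (\<Sum>j. a (j + n))" .
  have sb: "summable (\<lambda>j. q^(Suc n) * q^j)" using q by (intro summable_mult summable_geometric) simp
  have bnd: "\<bar>a (j + n)\<bar> \<le> q^(Suc n) * q^j" for j
    using ab[of "j + n"] n by (simp add: power_add mult_ac)
  have san: "summable (\<lambda>j. a (j + n))" using sa by (simp add: summable_iff_shift)
  have "(\<Sum>j. a (j + n)) \<le> (\<Sum>j. q^(Suc n) * q^j)"
    by (rule suminf_le[OF _ san sb]) (use bnd in \<open>auto simp: abs_le_iff\<close>)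
  moreover have "- (\<Sum>j. q^(Suc n) * q^j) \<le> (\<Sum>j. a (j + n))"
  proof -
    have "(\<Sum>j. - (q^(Suc n) * q^j)) \<le> (\<Sum>j. a (j + n))"
    proof (rule suminf_le[OF _ _ san])
      show "summable (\<lambda>j. - (q^(Suc n) * q^j))" using sb by (rule summable_minus)
      fix j show "- (q^(Suc n) * q^j) \<le> a (j + n)" using bnd[of j] by linarith
    qed
    then show ?thesis using suminf_minus[OF sb] by simp
  qed
  moreover have "(\<Sum>j. q^(Suc n) * q^j) = q^(Suc n) / (1 - q)"
    using q by (simp add: suminf_mult summable_geometric suminf_geometric)
  moreover have "q^(Suc n) / (1 - q) \<le> q^n / (1 - q)"
    using q by (intro divide_right_mono) (auto simp: power_Suc mult_left_le_one_le)
  ultimately show "\<bar>g t - f (dy T n t)\<bar> \<le> q^n / (1 - q)" using e by linarith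
qed

lemma step3:
  assumes m: "m \<ge> N" and st: "s \<in> {0..T}" "t \<in> {0..T}" "s \<le> t" "t - s \<le> T / 2^m"
  shows "\<bar>f (dy T m t) - f (dy T m s)\<bar> \<le> q^m"
proof -
  define ks where "ks = \<lfloor>2^m * s / T\<rfloor>"
  define kt where "kt = \<lfloor>2^m * t / T\<rfloor>"
  have "2^m * s / T \<le> 2^m * t / T" using st T by (simp add: divide_right_mono)
  then have 1: "ks \<le> kt" unfolding ks_def kt_def by (rule floor_mono)
  have "2^m * t / T \<le> 2^m * s / T + 1"
  proof -
    have "2^m * (t - s) \<le> 2^m * (T / 2^m)" using st by (intro mult_left_mono) auto
    then have "2^m * (t - s) \<le> T" by simp
    then show ?thesis using T by (simp add: field_simps)
  qed
  then have "kt \<le> \<lfloor>2^m * s / T + 1\<rfloor>" unfolding kt_def by (rule floor_mono)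
  then have 2: "kt \<le> ks + 1" by (simp add: ks_def)
  have k0: "0 \<le> ks" using floor_bounds[OF T st(1)] by (simp add: ks_def)
  have kb: "kt \<le> 2^m" using floor_bounds[OF T st(2)] by (simp add: kt_def)
  have "\<bar>f (T * of_int kt / 2^m) - f (T * of_int ks / 2^m)\<bar> \<le> q^m"
    by (rule adj) (use m k0 kb 1 2 in auto)
  then show ?thesis by (simp add: dy_def ks_def kt_def)
qed

lemma gdiff:
  assumes m: "m \<ge> N" and st: "s \<in> {0..T}" "t \<in> {0..T}" "\<bar>t - s\<bar> \<le> T / 2^m"
  shows "\<bar>g t - g s\<bar> \<le> (1 + 2 / (1 - q)) * q^m"
proof -
  have w: "\<bar>g t - g s\<bar> \<le> (1 + 2 / (1 - q)) * q^m"
    if "s \<in> {0..T}" "t \<in> {0..T}" "s \<le> t" "t - s \<le> T / 2^m" for s t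
  proof -
    have a: "\<bar>f (dy T m t) - f (dy T m s)\<bar> \<le> q^m" by (rule step3) (use m that in auto)
    have b: "\<bar>g t - f (dy T m t)\<bar> \<le> q^m / (1 - q)" by (rule conv_tail(2)) (use m that in auto)
    have c: "\<bar>g s - f (dy T m s)\<bar> \<le> q^m / (1 - q)" by (rule conv_tail(2)) (use m that in auto)
    have "\<bar>g t - g s\<bar> \<le> q^m + 2 * (q^m / (1 - q))" using a b c by linarith
    also have "\<dots> = (1 + 2 / (1 - q)) * q^m" by (simp add: algebra_simps)
    finally show ?thesis .
  qed
  show ?thesis
  proof (cases "s \<le> t")
    case True then show ?thesis using w[of s t] st by auto
  next
    case False then show ?thesis using w[of t s] st by (auto simp: abs_minus_commute)
  qed
qed

definition B where "B = (\<Sum>i\<le>(2::nat)^N. \<bar>f (T * real i / 2^N)\<bar>) + q^N / (1 - q)"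

lemma gbound:
  assumes t: "t \<in> {0..T}"
  shows "\<bar>g t\<bar> \<le> B"
proof -
  define k where "k = \<lfloor>2^N * t / T\<rfloor>"
  have k0: "0 \<le> k" "k \<le> 2^N" using floor_bounds[OF T t] by (auto simp: k_def)
  define i where "i = nat k"
  have ii: "i \<le> 2^N" using k0 unfolding i_def by (metis nat_le_iff of_nat_numeral of_nat_power)
  have "dy T N t = T * real i / 2^N" using k0 by (simp add: dy_def i_def k_def)
  then have "\<bar>f (dy T N t)\<bar> \<le> (\<Sum>i\<le>(2::nat)^N. \<bar>f (T * real i / 2^N)\<bar>)"
    using member_le_sum[of i "{..(2::nat)^N}" "\<lambda>i. \<bar>f (T * real i / 2^N)\<bar>"] ii by auto
  moreover have "\<bar>g t - f (dy T N t)\<bar> \<le> q^N / (1 - q)" by (rule conv_tail(2)[OF t]) simp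
  ultimately show ?thesis unfolding B_def by linarith
qed

lemma holder_g:
  assumes gam: "0 < \<gamma>" "q = (1/2) powr \<gamma>"
  shows "\<exists>K. \<forall>s\<in>{0..T}. \<forall>t\<in>{0..T}. \<bar>g t - g s\<bar> \<le> K * \<bar>t - s\<bar> powr \<gamma>"
proof -
  define K where "K = (1 + 2 / (1 - q)) * (2 / T) powr \<gamma> + 2 * B * (2^N / T) powr \<gamma>"
  have B0: "0 \<le> B" using gbound[of 0] T by auto
  have L0: "0 \<le> 1 + 2 / (1 - q)" using q by auto
  have "\<bar>g t - g s\<bar> \<le> K * \<bar>t - s\<bar> powr \<gamma>" if st: "s \<in> {0..T}" "t \<in> {0..T}" for s t
  proof (cases "t = s")
    case True then show ?thesis by simp
  next
    case False
    define r where "r = \<bar>t - s\<bar>"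
    have r0: "0 < r" "r \<le> T" using False st by (auto simp: r_def)
    obtain n where "T / r < 2^n" using real_arch_pow[of 2 "T / r"] by auto
    then have "\<exists>n. T / 2^n < r" using r0 by (auto simp: field_simps)
    then obtain n0 where n0: "T / 2^n0 < r" "\<forall>k<n0. \<not> T / 2^k < r" using exists_least_iff[of "\<lambda>n. T / 2^n < r"] by auto
    have "n0 \<noteq> 0"
    proof
      assume "n0 = 0" then show False using n0(1) r0 by simp
    qed
    then obtain m where mdef: "n0 = Suc m" by (cases n0) auto
    have rm: "r \<le> T / 2^m" using n0(2) mdef by auto
    have rm1: "T / 2^(Suc m) < r" using n0(1) mdef by simp
    have qm: "q^m = ((1/2)^m) powr \<gamma>"
      using gam by (simp add: powr_realpow[symmetric] powr_powr mult.commute)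
    have "(1/2::real)^m = 2 * (T / 2^(Suc m)) / T" using T by (simp add: power_one_over)
    also have "\<dots> \<le> 2 * r / T" using rm1 T by (intro divide_right_mono mult_left_mono) auto
    finally have "(1/2::real)^m \<le> 2 * r / T" .
    then have "q^m \<le> (2 * r / T) powr \<gamma>" unfolding qm using gam by (intro powr_mono2) auto
    also have "\<dots> = (2 / T) powr \<gamma> * r powr \<gamma>" using T r0 by (simp add: powr_mult[symmetric])
    finally have qm2: "q^m \<le> (2 / T) powr \<gamma> * r powr \<gamma>" .
    show ?thesis
    proof (cases "m \<ge> N")
      case True
      have "\<bar>g t - g s\<bar> \<le> (1 + 2 / (1 - q)) * q^m" by (rule gdiff[OF True st]) (use rm in \<open>simp add: r_def\<close>)
      also have "\<dots> \<le> (1 + 2 / (1 - q)) * ((2 / T) powr \<gamma> * r powr \<gamma>)" using qm2 L0 by (intro mult_left_mono)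
      also have "\<dots> \<le> K * r powr \<gamma>" unfolding K_def using B0 by (simp add: algebra_simps)
      finally show ?thesis by (simp add: r_def)
    next
      case False
      have "(2::real)^(Suc m) \<le> 2^N" using False by (intro power_increasing) auto
      then have "T / 2^N \<le> T / 2^(Suc m)" using T by (intro divide_left_mono) auto
      then have "T / 2^N < r" using rm1 by linarith
      then have "1 \<le> 2^N * r / T" using T by (simp add: field_simps)
      then have "1 \<le> (2^N * r / T) powr \<gamma>" using gam by (simp add: ge_one_powr_ge_zero)
      also have "\<dots> = (2^N / T) powr \<gamma> * r powr \<gamma>" using T r0 by (simp add: powr_mult[symmetric])
      finally have 1: "1 \<le> (2^N / T) powr \<gamma> * r powr \<gamma>" .
      have "\<bar>g t - g s\<bar> \<le> 2 * B" using gbound[OF st(1)] gbound[OF st(2)] by linarith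
      also have "\<dots> \<le> 2 * B * ((2^N / T) powr \<gamma> * r powr \<gamma>)" using 1 B0 by (simp add: mult_le_cancel_left1)
      also have "\<dots> \<le> K * r powr \<gamma>"
      proof -
        have "0 \<le> (1 + 2 / (1 - q)) * (2 / T) powr \<gamma> * r powr \<gamma>" using L0 by simp
        then show ?thesis unfolding K_def by (simp add: algebra_simps)
      qed
      finally show ?thesis by (simp add: r_def)
    qed
  qed
  then show ?thesis by blast
qed

end

lemma ALG:
  fixes T :: real and m n :: nat
  assumes T: "T > 0"
  defines "k \<equiv> m + 8" and "\<gamma> \<equiv> 1/4 - 1/(real m + 8)"
  shows "2^n * (((T / 2^n) powr (1/2))^k / (2 powr (- \<gamma> * real n))^(2*k)) = T powr (real k / 2) * (1/2)^n"
proof -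
  have k: "real k = real m + 8" by (simp add: k_def)
  have e1: "((T / 2^n) powr (1/2))^k = T powr (real k / 2) / 2 powr (real n * real k / 2)"
    using T by (simp add: powr_power powr_divide powr_realpow[symmetric] powr_powr mult_ac)
  have e2: "(2 powr (- \<gamma> * real n))^(2*k) = 2 powr (- (real n * real k / 2) + 2 * real n)"
  proof -
    have "(2 powr (- \<gamma> * real n))^(2*k) = 2 powr (real (2*k) * (- \<gamma> * real n))" by (simp add: powr_power)
    also have "real (2*k) * (- \<gamma> * real n) = - (real n * real k / 2) + 2 * real n"
      unfolding \<gamma>_def by (simp add: k field_simps)
    finally show ?thesis .
  qed
  have "2^n * (((T / 2^n) powr (1/2))^k / (2 powr (- \<gamma> * real n))^(2*k))
      = T powr (real k / 2) * (2 powr real n / (2 powr (real n * real k / 2) * 2 powr (- (real n * real k / 2) + 2 * real n)))"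
    unfolding e1 e2 by (simp add: powr_realpow)
  also have "2 powr (real n * real k / 2) * 2 powr (- (real n * real k / 2) + 2 * real n) = 2 powr (2 * real n)"
    by (simp add: powr_add[symmetric])
  also have "2 powr real n / 2 powr (2 * real n) = 2 powr (- real n)"
    by (simp add: powr_diff[symmetric])
  also have "2 powr (- real n) = (1/2::real)^n"
    by (simp add: powr_minus powr_realpow power_one_over inverse_eq_divide)
  finally show ?thesis .
qed

lemma (in prob_space) tail_bound:
  fixes Z :: "'a \<Rightarrow> real"
  assumes Zm: "Z \<in> borel_measurable M" and iZ: "integrable M (\<lambda>\<omega>. (Z \<omega>)^(2*k))" and a: "0 < a"
  shows "measure M {\<omega>\<in>space M. a < \<bar>Z \<omega>\<bar>} \<le> (\<integral>\<omega>. (Z \<omega>)^(2*k) \<partial>M) / a^(2*k)"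
proof -
  have "{\<omega>\<in>space M. a < \<bar>Z \<omega>\<bar>} \<subseteq> {\<omega>\<in>space M. (Z \<omega>)^(2*k) \<ge> a^(2*k)}"
  proof safe
    fix \<omega> assume "a < \<bar>Z \<omega>\<bar>"
    then have "a^(2*k) \<le> \<bar>Z \<omega>\<bar>^(2*k)" using a by (intro power_mono) auto
    then show "(Z \<omega>)^(2*k) \<ge> a^(2*k)" by (simp add: power_even_abs)
  qed
  then have "measure M {\<omega>\<in>space M. a < \<bar>Z \<omega>\<bar>} \<le> measure M {\<omega>\<in>space M. (Z \<omega>)^(2*k) \<ge> a^(2*k)}"
    using Zm by (intro finite_measure_mono) auto
  also have "\<dots> \<le> (\<integral>\<omega>. (Z \<omega>)^(2*k) \<partial>M) / a^(2*k)"
    by (rule integral_Markov_inequality_measure[OF iZ]) (use a in \<open>auto simp: zero_le_even_power\<close>)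
  finally show ?thesis .
qed

locale kolm = prob_space M for M :: "'a measure" +
  fixes X :: "real \<Rightarrow> 'a \<Rightarrow> real" and T :: real
  assumes T: "T > 0" and meas: "\<And>t. t \<in> {0..T} \<Longrightarrow> X t \<in> borel_measurable M"
    and mom: "\<And>k. \<exists>C. \<forall>s\<in>{0..T}. \<forall>t\<in>{0..T}. integrable M (\<lambda>\<omega>. (X t \<omega> - X s \<omega>)^(2*k)) \<and>
               (\<integral>\<omega>. (X t \<omega> - X s \<omega>)^(2*k) \<partial>M) \<le> C * (\<bar>t - s\<bar> powr (1/2))^k"
begin

definition Cm :: "nat \<Rightarrow> real" where
  "Cm k = (SOME C. \<forall>s\<in>{0..T}. \<forall>t\<in>{0..T}. integrable M (\<lambda>\<omega>. (X t \<omega> - X s \<omega>)^(2*k)) \<and>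
               (\<integral>\<omega>. (X t \<omega> - X s \<omega>)^(2*k) \<partial>M) \<le> C * (\<bar>t - s\<bar> powr (1/2))^k)"

lemma Cm:
  assumes "s \<in> {0..T}" "t \<in> {0..T}"
  shows "integrable M (\<lambda>\<omega>. (X t \<omega> - X s \<omega>)^(2*k))"
    "(\<integral>\<omega>. (X t \<omega> - X s \<omega>)^(2*k) \<partial>M) \<le> Cm k * (\<bar>t - s\<bar> powr (1/2))^k"
proof -
  have "\<forall>s\<in>{0..T}. \<forall>t\<in>{0..T}. integrable M (\<lambda>\<omega>. (X t \<omega> - X s \<omega>)^(2*k)) \<and>
               (\<integral>\<omega>. (X t \<omega> - X s \<omega>)^(2*k) \<partial>M) \<le> Cm k * (\<bar>t - s\<bar> powr (1/2))^k"
    unfolding Cm_def by (rule someI_ex[OF mom[of k]])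
  then show "integrable M (\<lambda>\<omega>. (X t \<omega> - X s \<omega>)^(2*k))"
    "(\<integral>\<omega>. (X t \<omega> - X s \<omega>)^(2*k) \<partial>M) \<le> Cm k * (\<bar>t - s\<bar> powr (1/2))^k"
    using assms by blast+
qed

lemma incr_tail:
  assumes "s \<in> {0..T}" "t \<in> {0..T}" "0 < a"
  shows "measure M {\<omega>\<in>space M. a < \<bar>X t \<omega> - X s \<omega>\<bar>} \<le> Cm k * (\<bar>t - s\<bar> powr (1/2))^k / a^(2*k)"
proof -
  have "measure M {\<omega>\<in>space M. a < \<bar>X t \<omega> - X s \<omega>\<bar>} \<le> (\<integral>\<omega>. (X t \<omega> - X s \<omega>)^(2*k) \<partial>M) / a^(2*k)"
    by (rule tail_bound) (use assms meas Cm(1) in auto)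
  also have "\<dots> \<le> Cm k * (\<bar>t - s\<bar> powr (1/2))^k / a^(2*k)"
    using Cm(2)[OF assms(1,2)] assms(3) by (intro divide_right_mono) auto
  finally show ?thesis .
qed

definition gam :: "nat \<Rightarrow> real" where "gam m = 1/4 - 1/(real m + 8)"

definition A :: "nat \<Rightarrow> nat \<Rightarrow> 'a set" where
  "A m n = (\<Union>i\<in>{..<(2::nat)^n}. {\<omega>\<in>space M. 2 powr (- gam m * real n) < \<bar>X (T * (real i + 1) / 2^n) \<omega> - X (T * real i / 2^n) \<omega>\<bar>})"

lemma dyad_in: "i < (2::nat)^n \<Longrightarrow> T * real i / 2^n \<in> {0..T}" "i < (2::nat)^n \<Longrightarrow> T * (real i + 1) / 2^n \<in> {0..T}"
proof -
  assume i: "i < (2::nat)^n"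
  then have "Suc i \<le> (2::nat)^n" by simp
  then have "real (Suc i) \<le> real ((2::nat)^n)" by (rule of_nat_mono)
  then have 1: "real i + 1 \<le> 2^n" by simp
  then have 2: "real i \<le> 2^n" by linarith
  have p: "(0::real) < 2^n" by simp
  have "T * (real i + 1) \<le> T * 2^n" using 1 T by (intro mult_left_mono) auto
  then have a: "T * (real i + 1) / 2^n \<le> T" using p by (simp add: pos_divide_le_eq)
  have "T * real i \<le> T * 2^n" using 2 T by (intro mult_left_mono) auto
  then have b: "T * real i / 2^n \<le> T" using p by (simp add: pos_divide_le_eq)
  have c: "0 \<le> T * real i / 2^n" "0 \<le> T * (real i + 1) / 2^n" using T by auto
  show "T * real i / 2^n \<in> {0..T}" using b c by simp
  show "T * (real i + 1) / 2^n \<in> {0..T}" using a c by simp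
qed

lemma H: "i < 2^n \<Longrightarrow> {\<omega>\<in>space M. 2 powr (- gam m * real n) < \<bar>X (T * (real i + 1) / 2^n) \<omega> - X (T * real i / 2^n) \<omega>\<bar>} \<in> sets M"
  proof -
    assume that: "i < 2^n"
    have m1: "X (T * (real i + 1) / 2^n) \<in> borel_measurable M" by (rule meas[OF dyad_in(2)[OF that]])
    have m2: "X (T * real i / 2^n) \<in> borel_measurable M" by (rule meas[OF dyad_in(1)[OF that]])
    have g: "(\<lambda>\<omega>. \<bar>X (T * (real i + 1) / 2^n) \<omega> - X (T * real i / 2^n) \<omega>\<bar>) \<in> borel_measurable M"
      by (intro borel_measurable_abs borel_measurable_diff m1 m2)
    show ?thesis using g unfolding borel_measurable_iff_greater by blast
  qed

lemma A_sets[measurable]: "A m n \<in> sets M"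
proof -
  show ?thesis unfolding A_def
  proof (rule sets.finite_UN)
    show "finite {..<(2::nat)^n}" by (rule finite_lessThan)
    fix i assume "i \<in> {..<(2::nat)^n}"
    then have "i < 2^n" by (simp only: lessThan_iff)
    then show "{\<omega>\<in>space M. 2 powr (- gam m * real n) < \<bar>X (T * (real i + 1) / 2^n) \<omega> - X (T * real i / 2^n) \<omega>\<bar>} \<in> sets M"
      by (rule H)
  qed
qed

lemma A_measure: "measure M (A m n) \<le> Cm (m + 8) * T powr (real (m + 8) / 2) * (1/2)^n"
proof -
  define k where "k = m + 8"
  define th where "th = (2::real) powr (- gam m * real n)"
  have th: "0 < th" by (simp add: th_def)
  have "measure M (A m n) \<le> (\<Sum>i<(2::nat)^n. measure M {\<omega>\<in>space M. th < \<bar>X (T * (real i + 1) / 2^n) \<omega> - X (T * real i / 2^n) \<omega>\<bar>})"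
    unfolding A_def th_def
  proof (rule measure_UNION_le)
    fix i assume i: "i \<in> {..<(2::nat)^n}"
    then have "i < 2^n" by (simp only: lessThan_iff)
    then show "{\<omega>\<in>space M. 2 powr (- gam m * real n) < \<bar>X (T * (real i + 1) / 2^n) \<omega> - X (T * real i / 2^n) \<omega>\<bar>} \<in> sets M"
      by (rule H)
  qed (rule finite_lessThan)
  also have "\<dots> \<le> (\<Sum>i<(2::nat)^n. Cm k * ((T / 2^n) powr (1/2))^k / th^(2*k))"
  proof (rule sum_mono)
    fix i assume i0: "i \<in> {..<(2::nat)^n}"
    then have i: "i < 2^n" by (simp only: lessThan_iff)
    have d: "\<bar>T * (real i + 1) / 2^n - T * real i / 2^n\<bar> = T / 2^n" using T by (simp add: field_simps)
    show "measure M {\<omega>\<in>space M. th < \<bar>X (T * (real i + 1) / 2^n) \<omega> - X (T * real i / 2^n) \<omega>\<bar>}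
        \<le> Cm k * ((T / 2^n) powr (1/2))^k / th^(2*k)"
      using incr_tail[OF dyad_in(1)[OF i] dyad_in(2)[OF i] th, of k] unfolding d .
  qed
  also have "\<dots> = Cm k * (2^n * (((T / 2^n) powr (1/2))^k / th^(2*k)))"
    by (simp only: sum_constant card_lessThan of_nat_power of_nat_numeral) (simp add: algebra_simps)
  also have "2^n * (((T / 2^n) powr (1/2))^k / th^(2*k)) = T powr (real k / 2) * (1/2)^n"
    unfolding th_def gam_def k_def by (rule ALG[OF T])
  finally show ?thesis by (simp add: k_def mult_ac)
qed

end

lemma holder_mono:
  fixes f :: "real \<Rightarrow> real"
  assumes T: "T > 0" and d: "0 < \<delta>" "\<delta> \<le> \<gamma>"
    and H: "\<forall>s\<in>{0..T}. \<forall>t\<in>{0..T}. \<bar>f t - f s\<bar> \<le> K * \<bar>t - s\<bar> powr \<gamma>"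
  shows "holder_on T \<delta> f"
  unfolding holder_on_def
proof (intro exI ballI)
  fix s t assume st: "s \<in> {0..T}" "t \<in> {0..T}"
  show "\<bar>f t - f s\<bar> \<le> (max K 0 * T powr (\<gamma> - \<delta>)) * \<bar>t - s\<bar> powr \<delta>"
  proof (cases "t = s")
    case True then show ?thesis by simp
  next
    case False
    then have r: "0 < \<bar>t - s\<bar>" "\<bar>t - s\<bar> \<le> T" using st by auto
    have p1: "\<bar>t - s\<bar> powr \<gamma> = \<bar>t - s\<bar> powr (\<gamma> - \<delta>) * \<bar>t - s\<bar> powr \<delta>"
      using r by (simp add: powr_add[symmetric])
    have p2: "\<bar>t - s\<bar> powr (\<gamma> - \<delta>) * \<bar>t - s\<bar> powr \<delta> \<le> T powr (\<gamma> - \<delta>) * \<bar>t - s\<bar> powr \<delta>"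
      using r d by (intro mult_right_mono powr_mono2) auto
    have "\<bar>f t - f s\<bar> \<le> K * \<bar>t - s\<bar> powr \<gamma>" using H st by blast
    also have "\<dots> \<le> max K 0 * \<bar>t - s\<bar> powr \<gamma>" by (intro mult_right_mono) auto
    also have "\<dots> \<le> max K 0 * (T powr (\<gamma> - \<delta>) * \<bar>t - s\<bar> powr \<delta>)"
      using p1 p2 by (intro mult_left_mono) auto
    finally show ?thesis by (simp add: mult_ac)
  qed
qed

lemma dy_in:
  assumes T: "T > 0" and t: "t \<in> {0..T}"
  shows "dy T n t \<in> {0..T}" "\<bar>dy T n t - t\<bar> \<le> T / 2^n"
proof -
  define x where "x = 2^n * t / T"
  have k: "0 \<le> \<lfloor>x\<rfloor>" "\<lfloor>x\<rfloor> \<le> 2^n" using floor_bounds[OF T t, of n] by (auto simp: x_def)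
  have e: "dy T n t = T * of_int \<lfloor>x\<rfloor> / 2^n" by (simp add: dy_def x_def)
  have tx: "t = T * x / 2^n" using T by (simp add: x_def)
  have p: "(0::real) < 2^n" by simp
  have k2: "of_int \<lfloor>x\<rfloor> \<le> (2::real)^n" using k(2) by (metis of_int_le_iff of_int_numeral of_int_power)
  have "T * of_int \<lfloor>x\<rfloor> \<le> T * 2^n" using k2 T by (intro mult_left_mono) auto
  then have a: "T * of_int \<lfloor>x\<rfloor> / 2^n \<le> T" using p by (simp add: pos_divide_le_eq)
  have b: "0 \<le> T * of_int \<lfloor>x\<rfloor> / 2^n" using k T by simp
  show "dy T n t \<in> {0..T}" using a b e by simp
  have c1: "of_int \<lfloor>x\<rfloor> \<le> x" "x < of_int \<lfloor>x\<rfloor> + 1" by linarith+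
  have "t - dy T n t = T * x / 2^n - T * of_int \<lfloor>x\<rfloor> / 2^n" using e tx by linarith
  also have "\<dots> = T * (x - of_int \<lfloor>x\<rfloor>) / 2^n" by (simp add: field_simps)
  finally have "t - dy T n t = T * (x - of_int \<lfloor>x\<rfloor>) / 2^n" .
  moreover have c2: "0 \<le> x - of_int \<lfloor>x\<rfloor>" "x - of_int \<lfloor>x\<rfloor> \<le> 1" using c1 by linarith+
  then have "0 \<le> T * (x - of_int \<lfloor>x\<rfloor>)" "T * (x - of_int \<lfloor>x\<rfloor>) \<le> T * 1"
    using T by (auto intro!: mult_left_mono)
  ultimately have "0 \<le> t - dy T n t" "t - dy T n t \<le> T / 2^n"
    by (simp_all add: divide_right_mono)
  then show "\<bar>dy T n t - t\<bar> \<le> T / 2^n" by simp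
qed

context kolm begin

lemma Cm_nonneg: "0 \<le> Cm k"
proof -
  have "0 \<le> (\<integral>\<omega>. (X T \<omega> - X 0 \<omega>)^(2*k) \<partial>M)"
    by (rule integral_nonneg_AE) (simp add: zero_le_even_power)
  also have "\<dots> \<le> Cm k * (\<bar>T - 0\<bar> powr (1/2))^k" by (rule Cm(2)) (use T in auto)
  finally have "0 \<le> Cm k * (\<bar>T - 0\<bar> powr (1/2))^k" .
  moreover have "0 < (\<bar>T - 0\<bar> powr (1/2))^k" using T by simp
  ultimately show ?thesis by (simp add: zero_le_mult_iff)
qed

definition G :: "'a set" where "G = {\<omega>\<in>space M. \<forall>m. \<exists>N. \<forall>n\<ge>N. \<omega> \<notin> A m n}"

lemma G_sets: "G \<in> sets M"
proof -
  have "G = space M - (\<Union>m. \<Inter>N. \<Union>n\<in>{N..}. A m n)"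
    unfolding G_def atLeast_def by blast
  also have "\<dots> \<in> sets M" by measurable
  finally show ?thesis .
qed

lemma G_AE: "AE \<omega> in M. \<omega> \<in> G"
proof -
  have "AE \<omega> in M. eventually (\<lambda>n. \<omega> \<in> space M - A m n) sequentially" for m
  proof (rule borel_cantelli_AE1)
    show "A m n \<in> sets M" for n by (rule A_sets)
    show "emeasure M (A m n) < \<infinity>" for n by (simp add: less_top[symmetric])
    show "summable (\<lambda>n. measure M (A m n))"
    proof (rule summable_comparison_test')
      show "summable (\<lambda>n. Cm (m + 8) * T powr (real (m + 8) / 2) * (1/2)^n)"
        by (intro summable_mult summable_geometric) simp
      show "norm (measure M (A m n)) \<le> Cm (m + 8) * T powr (real (m + 8) / 2) * (1/2)^n" for n
        using A_measure[of m n] by simp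
    qed
  qed
  then have "AE \<omega> in M. \<forall>m. eventually (\<lambda>n. \<omega> \<in> space M - A m n) sequentially"
    by (simp add: AE_all_countable)
  then show ?thesis
  proof (rule AE_mp[OF _ AE_I2[OF impI]])
    fix \<omega> assume w: "\<omega> \<in> space M" "\<forall>m. eventually (\<lambda>n. \<omega> \<in> space M - A m n) sequentially"
    then show "\<omega> \<in> G" unfolding G_def eventually_sequentially by auto
  qed
qed

end

lemma half_powr_lt1: "0 < a \<Longrightarrow> (1/2::real) powr a < 1"
  using powr_less_mono2[of a "1/2" 1] by simp

context kolm begin

definition X' :: "real \<Rightarrow> 'a \<Rightarrow> real" where
  "X' t \<omega> = (if \<omega> \<in> G then lim (\<lambda>n. X (dy T n t) \<omega>) else 0)"

lemma X'_meas:
  assumes t: "t \<in> {0..T}"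
  shows "X' t \<in> borel_measurable M"
proof -
  have m: "X (dy T n t) \<in> borel_measurable M" for n by (rule meas[OF dy_in(1)[OF T t]])
  have "(\<lambda>\<omega>. lim (\<lambda>n. X (dy T n t) \<omega>)) \<in> borel_measurable M" by (rule borel_measurable_lim_metric[OF m])
  then show ?thesis unfolding X'_def
    by (rule measurable_If_set) (use G_sets in auto)
qed

lemma X'_version:
  assumes t: "t \<in> {0..T}"
  shows "AE \<omega> in M. X t \<omega> = X' t \<omega>"
proof -
  define r where "r = (1/2::real) powr (1/4)"
  define e where "e = (1/2::real) powr (1/8)"
  have r: "0 < r" "r < 1" unfolding r_def by (auto intro: half_powr_lt1)
  have e: "0 < e" "e < 1" unfolding e_def by (auto intro: half_powr_lt1)
  have e2: "e^2 = r" unfolding e_def r_def by (subst powr_power) simp_all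
  have r2: "(1/2::real) powr (1/2) = r^2" unfolding r_def by (simp add: powr_power)
  define B where "B n = {\<omega>\<in>space M. e^n < \<bar>X (dy T n t) \<omega> - X t \<omega>\<bar>}" for n
  have mt: "X t \<in> borel_measurable M" by (rule meas[OF t])
  have md: "X (dy T n t) \<in> borel_measurable M" for n by (rule meas[OF dy_in(1)[OF T t]])
  have Bs: "B n \<in> sets M" for n
  proof -
    have g: "(\<lambda>\<omega>. \<bar>X (dy T n t) \<omega> - X t \<omega>\<bar>) \<in> borel_measurable M"
      by (intro borel_measurable_abs borel_measurable_diff md mt)
    show ?thesis using g unfolding borel_measurable_iff_greater B_def by blast
  qed
  have Bm: "measure M (B n) \<le> Cm 1 * T powr (1/2) * r^n" for n
  proof -
    have "measure M (B n) \<le> Cm 1 * (\<bar>dy T n t - t\<bar> powr (1/2))^1 / (e^n)^(2*1)"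
      unfolding B_def by (rule incr_tail[OF t dy_in(1)[OF T t]]) (use e in simp)
    also have "\<dots> = Cm 1 * \<bar>dy T n t - t\<bar> powr (1/2) / (e^n)^2" by simp
    also have "\<dots> \<le> Cm 1 * (T / 2^n) powr (1/2) / (e^n)^2"
      using dy_in(2)[OF T t, of n] Cm_nonneg[of 1]
      by (intro divide_right_mono mult_left_mono powr_mono2) auto
    also have "(T / 2^n) powr (1/2) = T powr (1/2) * (r^2)^n"
    proof -
      have a1: "T / 2^n = T * (1/2)^n" by (simp add: power_one_over)
      have a2: "(1/2::real)^n = (1/2) powr real n" by (simp add: powr_realpow)
      have a3: "((1/2::real)^n) powr (1/2) = (1/2) powr (real n * (1/2))" unfolding a2 by (rule powr_powr)
      have a4: "(r^2)^n = (1/2) powr (real n * (1/2))" unfolding r2[symmetric] by (rule powr_power) simp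
      show ?thesis unfolding a1 a4 using T by (simp only: powr_mult a3)
    qed
    also have "(e^n)^2 = r^n" by (simp add: e2[symmetric] power_mult[symmetric] mult.commute)
    also have "Cm 1 * (T powr (1/2) * (r^2)^n) / r^n = Cm 1 * T powr (1/2) * r^n"
    proof -
      have "(r^2)^n = r^n * r^n" by (simp add: power2_eq_square power_mult_distrib)
      then show ?thesis using r by simp
    qed
    finally show ?thesis .
  qed
  have "AE \<omega> in M. eventually (\<lambda>n. \<omega> \<in> space M - B n) sequentially"
  proof (rule borel_cantelli_AE1)
    show "B n \<in> sets M" for n by (rule Bs)
    show "emeasure M (B n) < \<infinity>" for n by (simp add: less_top[symmetric])
    show "summable (\<lambda>n. measure M (B n))"
    proof (rule summable_comparison_test')
      show "summable (\<lambda>n. Cm 1 * T powr (1/2) * r^n)"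
        using r by (intro summable_mult summable_geometric) simp
      show "norm (measure M (B n)) \<le> Cm 1 * T powr (1/2) * r^n" for n using Bm[of n] by simp
    qed
  qed
  then show ?thesis
  proof (rule AE_mp[OF _ AE_mp[OF G_AE AE_I2[OF impI[OF impI]]]])
    fix \<omega> assume w: "\<omega> \<in> space M" "\<omega> \<in> G" "eventually (\<lambda>n. \<omega> \<in> space M - B n) sequentially"
    have ev: "eventually (\<lambda>n. norm (X (dy T n t) \<omega> - X t \<omega>) \<le> e^n) sequentially"
      using w(3) by eventually_elim (auto simp: B_def w(1))
    have "(\<lambda>n. X (dy T n t) \<omega> - X t \<omega>) \<longlonglongrightarrow> 0"
      by (rule Lim_null_comparison[OF ev]) (rule LIMSEQ_power_zero, use e in simp)
    then have "(\<lambda>n. (X (dy T n t) \<omega> - X t \<omega>) + X t \<omega>) \<longlonglongrightarrow> 0 + X t \<omega>"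
      by (intro tendsto_add tendsto_const)
    then have "(\<lambda>n. X (dy T n t) \<omega>) \<longlonglongrightarrow> X t \<omega>" by simp
    then show "X t \<omega> = X' t \<omega>" unfolding X'_def using w(2) by (simp add: limI)
  qed
qed

end

context kolm begin

lemma X'_holder:
  assumes w: "\<omega> \<in> space M" and d: "0 < \<delta>" "\<delta> < 1/4"
  shows "holder_on T \<delta> (\<lambda>t. X' t \<omega>)"
proof (cases "\<omega> \<in> G")
  case False
  then show ?thesis unfolding holder_on_def X'_def by (intro exI[of _ 0]) simp
next
  case True
  obtain m :: nat where m: "1 / (1/4 - \<delta>) < real m" using reals_Archimedean2 by blast
  have "1 / (1/4 - \<delta>) < real m + 8" using m by simp
  moreover have p: "0 < 1/4 - \<delta>" using d by simp
  ultimately have "1 < (real m + 8) * (1/4 - \<delta>)" by (simp add: divide_less_eq)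
  then have "1 / (real m + 8) < 1/4 - \<delta>" by (simp add: divide_less_eq mult.commute)
  then have dg: "\<delta> \<le> gam m" by (simp add: gam_def)
  have g0: "0 < gam m" using dg d by simp
  obtain N where N: "\<forall>n\<ge>N. \<omega> \<notin> A m n" using True unfolding G_def by blast
  define q where "q = (1/2::real) powr gam m"
  have q: "0 < q" "q < 1" unfolding q_def using half_powr_lt1[OF g0] by auto
  have qn: "q^n = 2 powr (- gam m * real n)" for n
  proof -
    have "q^n = (1/2) powr (real n * gam m)" unfolding q_def by (rule powr_power) simp
    also have "\<dots> = 2 powr (- gam m * real n)"
      by (simp add: powr_divide powr_minus inverse_eq_divide mult.commute)
    finally show ?thesis .
  qed
  interpret I: dyadic "\<lambda>t. X t \<omega>" T q N
  proof
    show "T > 0" by (rule T)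
    show "0 < q" "q < 1" by (rule q(1), rule q(2))
    fix n i assume n: "N \<le> n" and i: "i < (2::nat)^n"
    have "\<omega> \<notin> A m n" using N n by blast
    then have "\<omega> \<notin> {\<omega>\<in>space M. 2 powr (- gam m * real n) < \<bar>X (T * (real i + 1) / 2^n) \<omega> - X (T * real i / 2^n) \<omega>\<bar>}"
      unfolding A_def using i by blast
    then show "\<bar>X (T * (real i + 1) / 2^n) \<omega> - X (T * real i / 2^n) \<omega>\<bar> \<le> q^n"
      using w unfolding qn by auto
  qed
  obtain K where K: "\<forall>s\<in>{0..T}. \<forall>t\<in>{0..T}. \<bar>I.g t - I.g s\<bar> \<le> K * \<bar>t - s\<bar> powr gam m"
    using I.holder_g[OF g0 q_def] by blast
  have e: "X' t \<omega> = I.g t" for t unfolding X'_def I.g_def using True by simp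
  show ?thesis unfolding e by (rule holder_mono[OF T d(1) dg K])
qed

theorem version_exists:
  "\<exists>X'. is_version M T X X' \<and> (\<forall>\<omega>\<in>space M. \<forall>\<delta>. 0 < \<delta> \<and> \<delta> < 1/4 \<longrightarrow> holder_on T \<delta> (\<lambda>t. X' t \<omega>))"
proof (intro exI conjI)
  show "is_version M T X X'" unfolding is_version_def using X'_meas X'_version by blast
  show "\<forall>\<omega>\<in>space M. \<forall>\<delta>. 0 < \<delta> \<and> \<delta> < 1/4 \<longrightarrow> holder_on T \<delta> (\<lambda>t. X' t \<omega>)"
    using X'_holder by blast
qed

end

lemma RX_sym: "RX H a c = RX H c a" by (simp add: RX_def min.commute max.commute)
lemma RY_sym: "RY H a c = RY H c a" by (simp add: RY_def min.commute max.commute)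

lemma vX_bound:
  assumes H: "1/2 < H" "H < 1" and st: "s \<in> {0..T}" "t \<in> {0..T}"
  shows "RX H t t + RX H s s - 2 * RX H s t \<le>
     H / (2 * sqrt (2 * pi)) * (2 * T powr (2*H-1) / ((2*H-1) + 1/2) + 2 * T powr (2*H-1) / (2*H-1) + 2 * T powr (2*H-1)) * \<bar>t - s\<bar> powr (1/2)"
proof -
  define b where "b = 2*H-1"
  define c0 where "c0 = H / (2 * sqrt (2 * pi))"
  have b: "0 < b" "b < 1" using H by (auto simp: b_def)
  have c0: "0 < c0" using H by (simp add: c0_def)
  have w: "RX H t t + RX H s s - 2 * RX H s t \<le> c0 * (2 * T powr b / (b + 1/2) + 2 * T powr b / b + 2 * T powr b) * (t - s) powr (1/2)"
    if st: "0 \<le> s" "s \<le> t" "t \<le> T" for s t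
  proof -
    have 1: "RX H t t = c0 * integral {0..t} (fX b t t)"
      using RX_fX(1)[of t t H] fX_LBINT[of b t t] b st by (simp add: b_def c0_def)
    have 2: "RX H s s = c0 * integral {0..s} (fX b s s)"
      using RX_fX(1)[of s s H] fX_LBINT[of b s s] b st by (simp add: b_def c0_def)
    have 3: "RX H s t = c0 * integral {0..s} (fX b s t)"
      using RX_fX(1)[of s t H] fX_LBINT[of b s t] b st by (simp add: b_def c0_def)
    have "RX H t t + RX H s s - 2 * RX H s t = c0 * (integral {0..t} (fX b t t) + integral {0..s} (fX b s s) - 2 * integral {0..s} (fX b s t))"
      unfolding 1 2 3 by (simp add: algebra_simps)
    also have "\<dots> \<le> c0 * ((2 * T powr b / (b + 1/2) + 2 * T powr b / b + 2 * T powr b) * (t - s) powr (1/2))"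
      using IX_est[OF b st] c0 by (intro mult_left_mono) auto
    finally show ?thesis by (simp add: mult_ac)
  qed
  show ?thesis
  proof (cases "s \<le> t")
    case True then show ?thesis using w[of s t] st by (simp add: b_def c0_def)
  next
    case False
    then have "RX H s s + RX H t t - 2 * RX H t s \<le> c0 * (2 * T powr b / (b + 1/2) + 2 * T powr b / b + 2 * T powr b) * (s - t) powr (1/2)"
      using w[of t s] st by simp
    then show ?thesis using False RX_sym[of H s t] by (simp add: b_def c0_def abs_if)
  qed
qed

lemma vY_bound:
  assumes H: "1/2 < H" "H < 1" and st: "s \<in> {0..T}" "t \<in> {0..T}"
  shows "RY H t t + RY H s s - 2 * RY H s t \<le>
     H / (2 * sqrt (2 * pi)) * (2 * (2 * T) powr (2*H-1) + T powr (2*H-1) / (2*H-1) + 2 * T powr ((2*H-1) - 1/2) * T powr (1/2)) * \<bar>t - s\<bar> powr (1/2)"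
proof -
  define b where "b = 2*H-1"
  define c0 where "c0 = H / (2 * sqrt (2 * pi))"
  have b: "0 < b" "b < 1" using H by (auto simp: b_def)
  have c0: "0 < c0" using H by (simp add: c0_def)
  have w: "RY H t t + RY H s s - 2 * RY H s t \<le> c0 * (2 * (2 * T) powr b + T powr b / b + 2 * T powr (b - 1/2) * T powr (1/2)) * (t - s) powr (1/2)"
    if st: "0 \<le> s" "s \<le> t" "t \<le> T" for s t
  proof -
    have 1: "RY H t t = c0 * integral {0..t} (fY b t t)"
      using RY_fY(1)[of t t H] fY_LBINT[of b t t T] b st by (simp add: b_def c0_def)
    have 2: "RY H s s = c0 * integral {0..s} (fY b s s)"
      using RY_fY(1)[of s s H] fY_LBINT[of b s s T] b st by (simp add: b_def c0_def)
    have 3: "RY H s t = c0 * integral {0..s} (fY b s t)"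
      using RY_fY(1)[of s t H] fY_LBINT[of b s t T] b st by (simp add: b_def c0_def)
    have "RY H t t + RY H s s - 2 * RY H s t = c0 * (integral {0..t} (fY b t t) + integral {0..s} (fY b s s) - 2 * integral {0..s} (fY b s t))"
      unfolding 1 2 3 by (simp add: algebra_simps)
    also have "\<dots> \<le> c0 * ((2 * (2 * T) powr b + T powr b / b + 2 * T powr (b - 1/2) * T powr (1/2)) * (t - s) powr (1/2))"
      using IY_est[OF b st] c0 by (intro mult_left_mono) auto
    finally show ?thesis by (simp add: mult_ac)
  qed
  show ?thesis
  proof (cases "s \<le> t")
    case True then show ?thesis using w[of s t] st by (simp add: b_def c0_def)
  next
    case False
    then have "RY H s s + RY H t t - 2 * RY H t s \<le> c0 * (2 * (2 * T) powr b + T powr b / b + 2 * T powr (b - 1/2) * T powr (1/2)) * (s - t) powr (1/2)"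
      using w[of t s] st by simp
    then show ?thesis using False RY_sym[of H s t] by (simp add: b_def c0_def abs_if)
  qed
qed

lemma gp_summary:
  fixes M :: "'a measure" and X :: "real \<Rightarrow> 'a \<Rightarrow> real"
  assumes P: "prob_space M" and T: "T > 0" and cgp: "centered_gaussian_process M T X R"
    and sym: "\<And>a b. R a b = R b a" and C: "0 \<le> C"
    and vb: "\<And>s t. s \<in> {0..T} \<Longrightarrow> t \<in> {0..T} \<Longrightarrow> R t t + R s s - 2 * R s t \<le> C * \<bar>t - s\<bar> powr (1/2)"
  shows "\<forall>s\<in>{0..T}. \<forall>t\<in>{0..T}. (\<integral>\<omega>. \<bar>X t \<omega> - X s \<omega>\<bar>^2 \<partial>M) \<le> C * \<bar>t - s\<bar> powr (1/2)"
    and "\<exists>X'. is_version M T X X' \<and> (\<forall>\<omega>\<in>space M. \<forall>\<delta>. 0 < \<delta> \<and> \<delta> < 1/4 \<longrightarrow> holder_on T \<delta> (\<lambda>t. X' t \<omega>))"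
proof -
  show "\<forall>s\<in>{0..T}. \<forall>t\<in>{0..T}. (\<integral>\<omega>. \<bar>X t \<omega> - X s \<omega>\<bar>^2 \<partial>M) \<le> C * \<bar>t - s\<bar> powr (1/2)"
  proof (intro ballI)
    fix s t assume st: "s \<in> {0..T}" "t \<in> {0..T}"
    have "(\<integral>\<omega>. \<bar>X t \<omega> - X s \<omega>\<bar>^2 \<partial>M) = (\<integral>\<omega>. (X t \<omega> - X s \<omega>)^(2*1) \<partial>M)" by simp
    also have "\<dots> = fact (2*1) / (2^1 * fact 1) * (R t t + R s s - 2 * R s t)^1"
      by (rule gp_incr(3)[OF P cgp sym st])
    also have "\<dots> = R t t + R s s - 2 * R s t" by simp
    finally show "(\<integral>\<omega>. \<bar>X t \<omega> - X s \<omega>\<bar>^2 \<partial>M) \<le> C * \<bar>t - s\<bar> powr (1/2)" using vb[OF st] by simp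
  qed
  have meas: "X t \<in> borel_measurable M" if "t \<in> {0..T}" for t
    using cgp that unfolding centered_gaussian_process_def by blast
  have KK: "kolm M X T"
  proof (rule kolm.intro[OF P], rule kolm_axioms.intro)
    show "T > 0" by (rule T)
    show "\<And>t. t \<in> {0..T} \<Longrightarrow> X t \<in> borel_measurable M" by (rule meas)
    fix k :: nat
    show "\<exists>Ck. \<forall>s\<in>{0..T}. \<forall>t\<in>{0..T}. integrable M (\<lambda>\<omega>. (X t \<omega> - X s \<omega>)^(2*k)) \<and>
               (\<integral>\<omega>. (X t \<omega> - X s \<omega>)^(2*k) \<partial>M) \<le> Ck * (\<bar>t - s\<bar> powr (1/2))^k"
    proof (intro exI ballI conjI)
      fix s t assume st: "s \<in> {0..T}" "t \<in> {0..T}"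
      show "integrable M (\<lambda>\<omega>. (X t \<omega> - X s \<omega>)^(2*k))" by (rule gp_incr(2)[OF P cgp sym st])
      have v0: "0 \<le> R t t + R s s - 2 * R s t" by (rule gp_incr(1)[OF P cgp sym st])
      have "(\<integral>\<omega>. (X t \<omega> - X s \<omega>)^(2*k) \<partial>M) = fact (2*k) / (2^k * fact k) * (R t t + R s s - 2 * R s t)^k"
        by (rule gp_incr(3)[OF P cgp sym st])
      also have "\<dots> \<le> fact (2*k) / (2^k * fact k) * (C * \<bar>t - s\<bar> powr (1/2))^k"
        using v0 vb[OF st] by (intro mult_left_mono power_mono) auto
      also have "\<dots> = (fact (2*k) / (2^k * fact k) * C^k) * (\<bar>t - s\<bar> powr (1/2))^k"
        by (simp add: power_mult_distrib)
      finally show "(\<integral>\<omega>. (X t \<omega> - X s \<omega>)^(2*k) \<partial>M) \<le> (fact (2*k) / (2^k * fact k) * C^k) * (\<bar>t - s\<bar> powr (1/2))^k" .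
    qed
  qed
  interpret kolm M X T by (rule KK)
  show "\<exists>X'. is_version M T X X' \<and> (\<forall>\<omega>\<in>space M. \<forall>\<delta>. 0 < \<delta> \<and> \<delta> < 1/4 \<longrightarrow> holder_on T \<delta> (\<lambda>t. X' t \<omega>))"
    by (rule version_exists)
qed

theorem proposition3p2:
  fixes M :: "'a measure" and X Y :: "real \<Rightarrow> 'a \<Rightarrow> real" and H T :: real
  assumes "prob_space M"
    and "1/2 < H" and "H < 1" and "T > 0"
    and "centered_gaussian_process M T X (RX H)"
    and "centered_gaussian_process M T Y (RY H)"
  shows "(\<exists>C>0. \<forall>s\<in>{0..T}. \<forall>t\<in>{0..T}.
            (\<integral>\<omega>. \<bar>X t \<omega> - X s \<omega>\<bar>^2 \<partial>M) \<le> C * \<bar>t - s\<bar> powr (1/2) \<and>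
            (\<integral>\<omega>. \<bar>Y t \<omega> - Y s \<omega>\<bar>^2 \<partial>M) \<le> C * \<bar>t - s\<bar> powr (1/2))
       \<and> (\<exists>X'. is_version M T X X' \<and>
            (\<forall>\<omega>\<in>space M. \<forall>\<delta>. 0 < \<delta> \<and> \<delta> < 1/4 \<longrightarrow> holder_on T \<delta> (\<lambda>t. X' t \<omega>)))
       \<and> (\<exists>Y'. is_version M T Y Y' \<and>
            (\<forall>\<omega>\<in>space M. \<forall>\<delta>. 0 < \<delta> \<and> \<delta> < 1/4 \<longrightarrow> holder_on T \<delta> (\<lambda>t. Y' t \<omega>)))"
proof -
  note P = assms(1) and H = assms(2,3) and T = assms(4)
  define b where "b = 2*H-1"
  have b: "0 < b" "b < 1" using H by (auto simp: b_def)
  define CX where "CX = H / (2 * sqrt (2 * pi)) * (2 * T powr (2*H-1) / ((2*H-1) + 1/2) + 2 * T powr (2*H-1) / (2*H-1) + 2 * T powr (2*H-1))"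
  define CY where "CY = H / (2 * sqrt (2 * pi)) * (2 * (2 * T) powr (2*H-1) + T powr (2*H-1) / (2*H-1) + 2 * T powr ((2*H-1) - 1/2) * T powr (1/2))"
  have CX: "0 \<le> CX" unfolding CX_def using H b by (intro mult_nonneg_nonneg add_nonneg_nonneg) (auto simp: b_def)
  have CY: "0 \<le> CY" unfolding CY_def using H b by (intro mult_nonneg_nonneg add_nonneg_nonneg) (auto simp: b_def)
  have vX: "\<And>s t. s \<in> {0..T} \<Longrightarrow> t \<in> {0..T} \<Longrightarrow> RX H t t + RX H s s - 2 * RX H s t \<le> CX * \<bar>t - s\<bar> powr (1/2)"
    unfolding CX_def by (rule vX_bound[OF H])
  have vY: "\<And>s t. s \<in> {0..T} \<Longrightarrow> t \<in> {0..T} \<Longrightarrow> RY H t t + RY H s s - 2 * RY H s t \<le> CY * \<bar>t - s\<bar> powr (1/2)"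
    unfolding CY_def by (rule vY_bound[OF H])
  note GX = gp_summary[OF P T assms(5) RX_sym CX vX]
  note GY = gp_summary[OF P T assms(6) RY_sym CY vY]
  have first: "\<exists>C>0. \<forall>s\<in>{0..T}. \<forall>t\<in>{0..T}.
            (\<integral>\<omega>. \<bar>X t \<omega> - X s \<omega>\<bar>^2 \<partial>M) \<le> C * \<bar>t - s\<bar> powr (1/2) \<and>
            (\<integral>\<omega>. \<bar>Y t \<omega> - Y s \<omega>\<bar>^2 \<partial>M) \<le> C * \<bar>t - s\<bar> powr (1/2)"
  proof (intro exI[of _ "CX + CY + 1"] conjI ballI)
    show "0 < CX + CY + 1" using CX CY by simp
    fix s t assume st: "s \<in> {0..T}" "t \<in> {0..T}"
    have r: "0 \<le> \<bar>t - s\<bar> powr (1/2)" by simp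
    have "CX * \<bar>t - s\<bar> powr (1/2) \<le> (CX + CY + 1) * \<bar>t - s\<bar> powr (1/2)" using CY r by (intro mult_right_mono) auto
    then show "(\<integral>\<omega>. \<bar>X t \<omega> - X s \<omega>\<bar>^2 \<partial>M) \<le> (CX + CY + 1) * \<bar>t - s\<bar> powr (1/2)"
      using GX(1) st by fastforce
    have "CY * \<bar>t - s\<bar> powr (1/2) \<le> (CX + CY + 1) * \<bar>t - s\<bar> powr (1/2)" using CX r by (intro mult_right_mono) auto
    then show "(\<integral>\<omega>. \<bar>Y t \<omega> - Y s \<omega>\<bar>^2 \<partial>M) \<le> (CX + CY + 1) * \<bar>t - s\<bar> powr (1/2)"
      using GY(1) st by fastforce
  qed
  show ?thesis using first GX(2) GY(2) by blast
qed

end
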